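(* Let $r,d\ge 1$, let $G=S_{r,d}$, and let $H=\langle h\rangle$ be a nontrivial cyclic subgroup of $G$. The following are equivalent: (1) $H$ is verbally closed in $G$; (2) $H$ is a retract of $G$; (3) the image of $h$ in $G/G'$ (a free abelian group of rank $r$) is primitive, i.e. it can be included in a basis of $G/G'$.
   Context: $S_{r,d}=F_r/F_r^{(d)}$, the free solvable group of rank $r$ and derived length $d$ ($F_r$ free of rank $r$, $F^{(d)}$ the $d$-th derived subgroup); $G'$ is the derived subgroup. A subgroup $H\le G$ is verbally closed in $G$ if for every group word $w(x_1,\dots,x_n)$ (without constants) and every $h\in H$, if the equation $w(x_1,\dots,x_n)=h$ has a solution in $G$, then it has a solution in $H$. A retract of $G$ is a subgroup $H$ for which there is an endomorphism $\rho:G\to G$ with $\rho(G)\subseteq H$ and $\rho|_H=\mathrm{id}_H$. *)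

theory Defs
  imports "HOL-Algebra.Algebra"
begin

text \<open>A letter (b, i) stands for the generator x_i if b = False and for its
  inverse x_i^{-1} if b = True.  Group words (without constants) in variables
  x_0, x_1, ... are lists of letters.\<close>

type_synonym letter = "bool \<times> nat"

fun push :: "letter \<Rightarrow> letter list \<Rightarrow> letter list" where
  "push x [] = [x]"
| "push x (y # ys) = (if snd x = snd y \<and> fst x \<noteq> fst y then ys else x # y # ys)"

definition reduce :: "letter list \<Rightarrow> letter list" where
  "reduce xs = foldr push xs []"

fun reduced :: "letter list \<Rightarrow> bool" where
  "reduced [] = True"
| "reduced [x] = True"
| "reduced (x # y # ys) = (\<not> (snd x = snd y \<and> fst x \<noteq> fst y) \<and> reduced (y # ys))"

definition free_group :: "nat \<Rightarrow> letter list monoid" where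
  "free_group r = \<lparr> carrier = {w. reduced w \<and> (\<forall>l \<in> set w. snd l < r)},
                    monoid.mult = (\<lambda>u v. reduce (u @ v)),
                    monoid.one = [] \<rparr>"

definition free_solvable_group :: "nat \<Rightarrow> nat \<Rightarrow> letter list set monoid" where
  "free_solvable_group r d =
     free_group r Mod ((derived (free_group r) ^^ d) (carrier (free_group r)))"

definition eval_word :: "('a, 'b) monoid_scheme \<Rightarrow> (nat \<Rightarrow> 'a) \<Rightarrow> letter list \<Rightarrow> 'a" where
  "eval_word G f w =
     foldr (\<lambda>l acc. (if fst l then inv\<^bsub>G\<^esub> (f (snd l)) else f (snd l)) \<otimes>\<^bsub>G\<^esub> acc) w \<one>\<^bsub>G\<^esub>"

definition verbally_closed :: "'a set \<Rightarrow> ('a, 'b) monoid_scheme \<Rightarrow> bool" where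
  "verbally_closed H G \<longleftrightarrow>
     (\<forall>w h. h \<in> H \<longrightarrow>
        (\<exists>f. (\<forall>i. f i \<in> carrier G) \<and> eval_word G f w = h) \<longrightarrow>
        (\<exists>f. (\<forall>i. f i \<in> H) \<and> eval_word G f w = h))"

definition retract :: "'a set \<Rightarrow> ('a, 'b) monoid_scheme \<Rightarrow> bool" where
  "retract H G \<longleftrightarrow> H \<subseteq> carrier G \<and>
     (\<exists>\<rho> \<in> hom G G. \<rho> ` carrier G \<subseteq> H \<and> (\<forall>x \<in> H. \<rho> x = x))"

definition abelian_basis :: "('a, 'b) monoid_scheme \<Rightarrow> 'a set \<Rightarrow> bool" where
  "abelian_basis A B \<longleftrightarrow> B \<subseteq> carrier A \<and> generate A B = carrier A \<and>
     (\<forall>S (k :: 'a \<Rightarrow> int). finite S \<longrightarrow> S \<subseteq> B \<longrightarrow>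
        finprod A (\<lambda>s. s [^]\<^bsub>A\<^esub> k s) S = \<one>\<^bsub>A\<^esub> \<longrightarrow> (\<forall>s \<in> S. k s = 0))"

definition primitive :: "('a, 'b) monoid_scheme \<Rightarrow> 'a \<Rightarrow> bool" where
  "primitive A a \<longleftrightarrow> (\<exists>B. abelian_basis A B \<and> a \<in> B)"

end

theory Submission
  imports Defs
begin


definition flip :: "letter \<Rightarrow> letter" where "flip x = (\<not> fst x, snd x)"

lemma flip_flip[simp]: "flip (flip x) = x" by (simp add: flip_def)

lemma reduced_tail: "reduced (y # ys) \<Longrightarrow> reduced ys"
  by (cases ys) auto

lemma reduced_push: "reduced ys \<Longrightarrow> reduced (push x ys)"
proof (cases ys)
  case (Cons y zs)
  assume "reduced ys" then show ?thesis using Cons by (auto dest: reduced_tail)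
qed simp

lemma reduced_foldr: "reduced z \<Longrightarrow> reduced (foldr push xs z)"
  by (induction xs) (auto intro: reduced_push)

lemma reduced_reduce: "reduced (reduce xs)"
  unfolding reduce_def by (rule reduced_foldr) simp

lemma push_cancel: "reduced ys \<Longrightarrow> push x (push (flip x) ys) = ys"
proof (cases ys)
  case Nil then show ?thesis by (simp add: flip_def)
next
  case (Cons y zs)
  assume red: "reduced ys"
  show ?thesis
  proof (cases "snd (flip x) = snd y \<and> fst (flip x) \<noteq> fst y")
    case True
    then have yx: "y = x" by (cases x, cases y) (auto simp: flip_def)
    show ?thesis
    proof (cases "zs = []")
      case True then show ?thesis using Cons \<open>snd (flip x) = snd y \<and> fst (flip x) \<noteq> fst y\<close> yx by simp
    next
      case False
      then obtain z zs' where Cons2: "zs = z # zs'" by (cases zs) auto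
      then have "\<not> (snd x = snd z \<and> fst x \<noteq> fst z)" using red Cons yx by simp
      then show ?thesis using Cons Cons2 True yx by simp
    qed
  next
    case False
    then show ?thesis using Cons by (auto simp add: flip_def)
  qed
qed

lemma push_cancel': "reduced ys \<Longrightarrow> push (flip x) (push x ys) = ys"
  using push_cancel[of ys "flip x"] by simp

lemma foldr_reduce: "reduced z \<Longrightarrow> foldr push (reduce xs) z = foldr push xs z"
proof (induction xs)
  case Nil then show ?case by (simp add: reduce_def)
next
  case (Cons a xs)
  define L where "L = reduce xs"
  have redL: "reduced L" unfolding L_def by (rule reduced_reduce)
  have r1: "reduce (a # xs) = push a L" by (simp add: reduce_def L_def)
  show ?case
  proof (cases L)
    case Nil then show ?thesis using Cons r1 L_def by simp
  next
    case (Cons b L')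
    show ?thesis
    proof (cases "snd a = snd b \<and> fst a \<noteq> fst b")
      case True
      then have b: "b = flip a" by (cases a, cases b) (auto simp: flip_def)
      have "foldr push (a # xs) z = push a (foldr push L z)"
        using Cons.IH Cons.prems L_def by simp
      also have "\<dots> = push a (push (flip a) (foldr push L' z))" using Cons b by simp
      also have "\<dots> = foldr push L' z"
        by (rule push_cancel) (rule reduced_foldr[OF Cons.prems])
      finally show ?thesis using r1 Cons True by simp
    next
      case False
      have "foldr push (a # xs) z = push a (foldr push L z)"
        using Cons.IH Cons.prems L_def by simp
      also have "\<dots> = foldr push (a # L) z" by simp
      finally show ?thesis using r1 Cons False by auto
    qed
  qed
qed

lemma reduce_append: "reduce (xs @ ys) = foldr push xs (reduce ys)"
  by (simp add: reduce_def)

lemma reduce_reduced: "reduced xs \<Longrightarrow> reduce xs = xs"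
proof (induction xs)
  case Nil then show ?case by (simp add: reduce_def)
next
  case (Cons x xs)
  then have "reduce xs = xs" by (auto dest: reduced_tail)
  then show ?case using Cons.prems by (cases xs) (auto simp: reduce_def)
qed

lemma reduce_reduce[simp]: "reduce (reduce xs) = reduce xs"
  by (rule reduce_reduced) (rule reduced_reduce)

lemma reduce_assoc1: "reduce (reduce (u @ v) @ w) = reduce (u @ v @ w)"
proof -
  have "reduce (reduce (u @ v) @ w) = foldr push (reduce (u @ v)) (reduce w)"
    by (rule reduce_append)
  also have "\<dots> = foldr push (u @ v) (reduce w)" by (rule foldr_reduce) (rule reduced_reduce)
  also have "\<dots> = reduce (u @ v @ w)" by (simp add: reduce_append)
  finally show ?thesis .
qed

lemma reduce_assoc2: "reduce (u @ reduce (v @ w)) = reduce (u @ v @ w)"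
  by (simp add: reduce_append reduced_reduce del: foldr_append)
    (metis reduce_append reduce_reduce)

lemma set_push: "set (push x ys) \<subseteq> insert x (set ys)"
  by (cases ys) auto

lemma set_foldr_push: "set (foldr push xs z) \<subseteq> set xs \<union> set z"
  by (induction xs) (use set_push in fastforce)+

lemma set_reduce: "set (reduce xs) \<subseteq> set xs"
  using set_foldr_push[of xs "[]"] by (simp add: reduce_def)

definition winv :: "letter list \<Rightarrow> letter list" where "winv w = rev (map flip w)"

lemma reduce_winv_left: "reduce (winv u @ u) = []"
proof (induction u)
  case Nil then show ?case by (simp add: winv_def reduce_def)
next
  case (Cons a u)
  have "winv (a # u) @ a # u = winv u @ [flip a] @ a # u" by (simp add: winv_def)
  then have "reduce (winv (a # u) @ a # u) = foldr push (winv u) (push (flip a) (push a (reduce u)))"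
    by (simp only: reduce_append) (simp add: reduce_def)
  also have "\<dots> = foldr push (winv u) (reduce u)"
    by (simp add: push_cancel' reduced_reduce)
  finally show ?case using Cons by (simp add: reduce_append)
qed

lemma set_winv: "set (winv u) = flip ` set u" by (simp add: winv_def)

lemma free_group_group: "group (free_group r)"
proof (rule groupI)
  show "\<one>\<^bsub>free_group r\<^esub> \<in> carrier (free_group r)" by (simp add: free_group_def)
next
  fix x y assume "x \<in> carrier (free_group r)" "y \<in> carrier (free_group r)"
  then show "x \<otimes>\<^bsub>free_group r\<^esub> y \<in> carrier (free_group r)"
    using set_reduce[of "x @ y"] by (auto simp: free_group_def reduced_reduce)
next
  fix x y z
  show "x \<otimes>\<^bsub>free_group r\<^esub> y \<otimes>\<^bsub>free_group r\<^esub> z =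
        x \<otimes>\<^bsub>free_group r\<^esub> (y \<otimes>\<^bsub>free_group r\<^esub> z)"
    by (simp add: free_group_def reduce_assoc1 reduce_assoc2)
next
  fix x assume "x \<in> carrier (free_group r)"
  then show "\<one>\<^bsub>free_group r\<^esub> \<otimes>\<^bsub>free_group r\<^esub> x = x"
    by (simp add: free_group_def reduce_reduced)
next
  fix x assume x: "x \<in> carrier (free_group r)"
  show "\<exists>y\<in>carrier (free_group r). y \<otimes>\<^bsub>free_group r\<^esub> x = \<one>\<^bsub>free_group r\<^esub>"
  proof (intro bexI)
    have "reduce (reduce (winv x) @ x) = reduce (winv x @ x)"
      by (simp add: reduce_append foldr_reduce reduced_reduce)
    then show "reduce (winv x) \<otimes>\<^bsub>free_group r\<^esub> x = \<one>\<^bsub>free_group r\<^esub>"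
      by (simp add: free_group_def reduce_winv_left)
    show "reduce (winv x) \<in> carrier (free_group r)"
      using x set_reduce[of "winv x"] by (force simp: free_group_def reduced_reduce set_winv flip_def)
  qed
qed


definition esum :: "letter list \<Rightarrow> nat \<Rightarrow> int" where
  "esum w i = sum_list (map (\<lambda>l. if snd l = i then (if fst l then -1 else 1) else 0) w)"

lemma esum_Nil[simp]: "esum [] i = 0" by (simp add: esum_def)
lemma esum_Cons: "esum (x # w) i = esum [x] i + esum w i" by (simp add: esum_def)
lemma esum_append: "esum (u @ v) i = esum u i + esum v i" by (simp add: esum_def)

lemma esum_push: "esum (push x ys) i = esum [x] i + esum ys i"
proof (cases ys)
  case (Cons y zs)
  then show ?thesis
    by (cases x, cases y) (auto simp: esum_def)
qed (simp add: esum_def)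

lemma esum_reduce: "esum (reduce xs) i = esum xs i"
proof (induction xs)
  case (Cons x xs)
  have "esum (reduce (x # xs)) i = esum (push x (reduce xs)) i" by (simp add: reduce_def)
  also have "\<dots> = esum [x] i + esum xs i" using Cons by (simp add: esum_push)
  finally show ?case by (metis esum_Cons)
qed (simp add: reduce_def)

lemma esum_mult: "esum (u \<otimes>\<^bsub>free_group r\<^esub> v) i = esum u i + esum v i"
  by (simp add: free_group_def esum_reduce esum_append)

lemma esum_supp: "w \<in> carrier (free_group r) \<Longrightarrow> r \<le> i \<Longrightarrow> esum w i = 0"
proof -
  assume w: "w \<in> carrier (free_group r)" and ri: "r \<le> i"
  have "\<forall>l \<in> set w. snd l < r" using w by (simp add: free_group_def)
  then show ?thesis using ri by (induction w) (auto simp: esum_def)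
qed

definition FN :: "nat \<Rightarrow> nat \<Rightarrow> letter list set" where
  "FN r d = (derived (free_group r) ^^ d) (carrier (free_group r))"

lemma FN_normal: "FN r d \<lhd> free_group r"
proof -
  interpret group "free_group r" by (rule free_group_group)
  show ?thesis unfolding FN_def
    by (induction d) (auto intro: derived_is_normal normal_self)
qed

lemma esum_inv: "w \<in> carrier (free_group r) \<Longrightarrow> esum (inv\<^bsub>free_group r\<^esub> w) i = - esum w i"
proof -
  interpret group "free_group r" by (rule free_group_group)
  assume w: "w \<in> carrier (free_group r)"
  have "inv\<^bsub>free_group r\<^esub> w \<otimes>\<^bsub>free_group r\<^esub> w = []"
    using w l_inv by (simp add: free_group_def)
  then have "esum (inv\<^bsub>free_group r\<^esub> w \<otimes>\<^bsub>free_group r\<^esub> w) i = 0" by simp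
  then show ?thesis by (simp add: esum_mult)
qed

lemma FN_esum: "d \<ge> 1 \<Longrightarrow> n \<in> FN r d \<Longrightarrow> esum n i = 0"
proof -
  interpret group "free_group r" by (rule free_group_group)
  assume d: "d \<ge> 1" and n: "n \<in> FN r d"
  define K where "K = {w \<in> carrier (free_group r). \<forall>i. esum w i = 0}"
  have sK: "subgroup K (free_group r)"
  proof (rule subgroupI)
    show "K \<subseteq> carrier (free_group r)" by (auto simp: K_def)
    have "[] \<in> K" by (simp add: K_def free_group_def)
    then show "K \<noteq> {}" by auto
    fix a b assume a: "a \<in> K" and b: "b \<in> K"
    show "inv\<^bsub>free_group r\<^esub> a \<in> K" using a by (auto simp: K_def esum_inv)
    show "a \<otimes>\<^bsub>free_group r\<^esub> b \<in> K" using a b by (auto simp: K_def esum_mult)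
  qed
  have "derived (free_group r) (carrier (free_group r)) \<subseteq> K"
    unfolding derived_def
    by (rule generate_subgroup_incl[OF _ sK]) (auto simp: K_def esum_inv esum_mult)
  moreover obtain d' where "d = Suc d'" using d by (cases d) auto
  moreover have "(derived (free_group r) ^^ d') (carrier (free_group r)) \<subseteq> carrier (free_group r)"
    by (rule exp_of_derived_in_carrier) simp
  ultimately have "FN r d \<subseteq> K" unfolding FN_def
    by (auto dest!: mono_derived[of _ "carrier (free_group r)"])
  then show ?thesis using n K_def by auto
qed

definition gy :: "nat \<Rightarrow> nat \<Rightarrow> nat \<Rightarrow> letter list set" where
  "gy r d i = FN r d #>\<^bsub>free_group r\<^esub> [(False, i)]"

definition geps :: "letter list set \<Rightarrow> nat \<Rightarrow> int" where
  "geps C i = esum (SOME w. w \<in> C) i"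

lemma geps_coset:
  assumes d: "d \<ge> 1" and w: "w \<in> carrier (free_group r)"
  shows "geps (FN r d #>\<^bsub>free_group r\<^esub> w) i = esum w i"
proof -
  interpret normal "FN r d" "free_group r" by (rule FN_normal)
  have "w \<in> FN r d #>\<^bsub>free_group r\<^esub> w" by (rule rcos_self[OF w subgroup_axioms])
  then have ex: "(SOME w'. w' \<in> FN r d #>\<^bsub>free_group r\<^esub> w) \<in> FN r d #>\<^bsub>free_group r\<^esub> w"
    by (rule someI)
  then obtain n where "n \<in> FN r d" "(SOME w'. w' \<in> FN r d #>\<^bsub>free_group r\<^esub> w) = n \<otimes>\<^bsub>free_group r\<^esub> w"
    by (auto simp: r_coset_def)
  then show ?thesis using FN_esum[OF d] by (simp add: geps_def esum_mult)
qed

lemma free_gen: "w \<in> carrier (free_group r) \<Longrightarrow> w \<in> generate (free_group r) ((\<lambda>i. [(False, i)]) ` {..<r})"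
proof (induction w)
  interpret group "free_group r" by (rule free_group_group)
  case Nil then show ?case using generate.one[of "free_group r"] by (simp add: free_group_def)
next
  interpret group "free_group r" by (rule free_group_group)
  case (Cons a w)
  have wc: "w \<in> carrier (free_group r)" using Cons.prems by (auto simp: free_group_def dest: reduced_tail)
  have ar: "snd a < r" using Cons.prems by (simp add: free_group_def)
  have prod: "a # w = [a] \<otimes>\<^bsub>free_group r\<^esub> w"
    using Cons.prems by (simp add: free_group_def reduce_reduced)
  have "[a] \<in> generate (free_group r) ((\<lambda>i. [(False, i)]) ` {..<r})"
  proof (cases "fst a")
    case False
    then have "a = (False, snd a)" by (cases a) auto
    then show ?thesis using ar by (metis generate.incl image_eqI lessThan_iff)
  next
    case True
    then have aT: "a = (True, snd a)" by (cases a) auto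
    have c1: "[(False, snd a)] \<in> carrier (free_group r)" using ar by (simp add: free_group_def)
    have c2: "[a] \<in> carrier (free_group r)" using ar by (simp add: free_group_def)
    have "[a] \<otimes>\<^bsub>free_group r\<^esub> [(False, snd a)] = \<one>\<^bsub>free_group r\<^esub>"
      by (subst aT) (simp add: free_group_def reduce_def)
    then have "inv\<^bsub>free_group r\<^esub> [(False, snd a)] = [a]"
      using inv_equality c1 c2 by blast
    then show ?thesis using ar by (metis generate.inv image_eqI lessThan_iff)
  qed
  then show ?case using prod Cons.IH[OF wc] by (metis generate.eng)
qed


definition supp :: "nat \<Rightarrow> (nat \<Rightarrow> int) \<Rightarrow> bool" where
  "supp r v \<longleftrightarrow> (\<forall>i. r \<le> i \<longrightarrow> v i = 0)"

definition zbasis :: "nat \<Rightarrow> (nat \<Rightarrow> nat \<Rightarrow> int) \<Rightarrow> bool" where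
  "zbasis r M \<longleftrightarrow> (\<forall>k<r. supp r (M k)) \<and>
     (\<forall>v. supp r v \<longrightarrow> (\<exists>c. \<forall>i. v i = (\<Sum>k<r. c k * M k i))) \<and>
     (\<forall>c. (\<forall>i. (\<Sum>k<r. c k * M k i) = 0) \<longrightarrow> (\<forall>k<r. c k = 0))"

definition unimodr :: "nat \<Rightarrow> (nat \<Rightarrow> int) \<Rightarrow> bool" where
  "unimodr r v \<longleftrightarrow> (\<exists>n. (\<Sum>i<r. n i * v i) = 1)"

lemma supp_sum: "(\<And>k. k < r \<Longrightarrow> supp r (M k)) \<Longrightarrow> supp r (\<lambda>i. \<Sum>k<r. c k * M k i)"
  by (auto simp: supp_def)

lemma zbasis_map:
  assumes Z: "zbasis r M"
    and sL: "\<And>v. supp r v \<Longrightarrow> supp r (L v)"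
    and sL': "\<And>v. supp r v \<Longrightarrow> supp r (L' v)"
    and i1: "\<And>v. supp r v \<Longrightarrow> L' (L v) = v"
    and i2: "\<And>v. supp r v \<Longrightarrow> L (L' v) = v"
    and lin: "\<And>c N. L (\<lambda>i. \<Sum>k<r. c k * N k i) = (\<lambda>i. \<Sum>k<r. c k * L (N k) i)"
    and z: "L' (\<lambda>_. 0) = (\<lambda>_. 0)"
  shows "zbasis r (\<lambda>k. L (M k))"
proof -
  have sM: "\<And>k. k < r \<Longrightarrow> supp r (M k)" using Z by (simp add: zbasis_def)
  have span: "\<And>v. supp r v \<Longrightarrow> \<exists>c. \<forall>i. v i = (\<Sum>k<r. c k * M k i)" using Z by (simp add: zbasis_def)
  have ind: "\<And>c. (\<forall>i. (\<Sum>k<r. c k * M k i) = 0) \<Longrightarrow> (\<forall>k<r. c k = 0)" using Z by (simp add: zbasis_def)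
  have "\<forall>k<r. supp r (L (M k))" using sM sL by blast
  moreover have "\<forall>v. supp r v \<longrightarrow> (\<exists>c. \<forall>i. v i = (\<Sum>k<r. c k * L (M k) i))"
  proof (intro allI impI)
    fix v assume v: "supp r v"
    obtain c where c: "\<forall>i. L' v i = (\<Sum>k<r. c k * M k i)" using span[OF sL'[OF v]] by blast
    then have "L' v = (\<lambda>i. \<Sum>k<r. c k * M k i)" by (intro ext) simp
    then have "v = L (\<lambda>i. \<Sum>k<r. c k * M k i)" using i2[OF v] by simp
    also have "\<dots> = (\<lambda>i. \<Sum>k<r. c k * L (M k) i)" by (rule lin)
    finally show "\<exists>c. \<forall>i. v i = (\<Sum>k<r. c k * L (M k) i)" by metis
  qed
  moreover have "\<forall>c. (\<forall>i. (\<Sum>k<r. c k * L (M k) i) = 0) \<longrightarrow> (\<forall>k<r. c k = 0)"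
  proof (rule allI, rule impI)
    fix c assume h: "\<forall>i. (\<Sum>k<r. c k * L (M k) i) = 0"
    define u where "u = (\<lambda>i. \<Sum>k<r. c k * M k i)"
    have su: "supp r u" unfolding u_def by (rule supp_sum) (rule sM)
    have "L u = (\<lambda>i. \<Sum>k<r. c k * L (M k) i)" unfolding u_def by (rule lin)
    also have "\<dots> = (\<lambda>_. 0)" using h by (intro ext) simp
    finally have "u = (\<lambda>_. 0)" using i1[OF su] z by metis
    then have "\<forall>i. (\<Sum>k<r. c k * M k i) = 0" unfolding u_def by (metis)
    then show "\<forall>k<r. c k = 0" by (rule ind)
  qed
  ultimately show ?thesis unfolding zbasis_def by blast
qed

definition std :: "nat \<Rightarrow> nat \<Rightarrow> int" where "std m = (\<lambda>l. if l = m then 1 else 0)"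

lemma sum_std: "(\<Sum>k<r. c k * std k i) = (if i < r then c i else 0)"
proof -
  have "(\<Sum>k<r. c k * std k i) = (\<Sum>k<r. if k = i then c k else 0)"
    by (intro sum.cong) (auto simp: std_def)
  also have "\<dots> = (if i < r then c i else 0)" by (simp add: sum.delta)
  finally show ?thesis .
qed

lemma zbasis_std: "zbasis r std"
  unfolding zbasis_def
proof (intro conjI allI impI)
  fix k assume "k < r" then show "supp r (std k)" by (auto simp: supp_def std_def)
next
  fix v assume v: "supp r v"
  show "\<exists>c. \<forall>i. v i = (\<Sum>k<r. c k * std k i)"
    by (rule exI[of _ v]) (use v in \<open>auto simp: sum_std supp_def\<close>)
next
  fix c k assume h: "\<forall>i. (\<Sum>k<r. c k * std k i) = 0" and k: "k < r"
  show "c k = 0" using h[rule_format, of k] k by (simp add: sum_std)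
qed

definition tv :: "nat \<Rightarrow> nat \<Rightarrow> int \<Rightarrow> (nat \<Rightarrow> int) \<Rightarrow> nat \<Rightarrow> int" where
  "tv i j t v = v(i := v i + t * v j)"

lemma tv_lin: "tv i j t (\<lambda>l. \<Sum>k<r. c k * N k l) = (\<lambda>l. \<Sum>k<r. c k * tv i j t (N k) l)"
proof (rule ext)
  fix l
  show "tv i j t (\<lambda>l. \<Sum>k<r. c k * N k l) l = (\<Sum>k<r. c k * tv i j t (N k) l)"
  proof (cases "l = i")
    case True
    have "(\<Sum>k<r. c k * tv i j t (N k) l) = (\<Sum>k<r. c k * N k i + t * (c k * N k j))"
      using True by (intro sum.cong) (auto simp: tv_def algebra_simps)
    also have "\<dots> = (\<Sum>k<r. c k * N k i) + t * (\<Sum>k<r. c k * N k j)"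
      by (simp add: sum.distrib sum_distrib_left)
    finally show ?thesis using True by (simp add: tv_def)
  next
    case False then show ?thesis by (simp add: tv_def)
  qed
qed

lemma tv_inv: "i \<noteq> j \<Longrightarrow> tv i j (- t) (tv i j t v) = v"
  by (rule ext) (simp add: tv_def)

lemma tv_supp: "i < r \<Longrightarrow> supp r v \<Longrightarrow> supp r (tv i j t v)"
  by (auto simp: supp_def tv_def)

lemma tv_zero: "tv i j t (\<lambda>_. 0) = (\<lambda>_. 0)"
  by (rule ext) (simp add: tv_def)

definition pv :: "nat \<Rightarrow> int \<Rightarrow> (nat \<Rightarrow> int) \<Rightarrow> nat \<Rightarrow> int" where
  "pv k s v = (\<lambda>l. if l = k then s * v 0 else if l = 0 then v k else v l)"

definition pv' :: "nat \<Rightarrow> int \<Rightarrow> (nat \<Rightarrow> int) \<Rightarrow> nat \<Rightarrow> int" where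
  "pv' k s v = (\<lambda>l. if l = 0 then s * v k else if l = k then v 0 else v l)"

lemma pv_lin: "pv k s (\<lambda>l. \<Sum>m<r. c m * N m l) = (\<lambda>l. \<Sum>m<r. c m * pv k s (N m) l)"
  by (rule ext) (auto simp: pv_def sum_distrib_left algebra_simps)

lemma pv_inv1: "s * s = 1 \<Longrightarrow> pv' k s (pv k s v) = v"
  by (rule ext) (auto simp: pv_def pv'_def mult.assoc[symmetric])

lemma pv_inv2: "s * s = 1 \<Longrightarrow> pv k s (pv' k s v) = v"
  by (rule ext) (auto simp: pv_def pv'_def mult.assoc[symmetric])

lemma pv_supp: "k < r \<Longrightarrow> supp r v \<Longrightarrow> supp r (pv k s v)"
  by (auto simp: supp_def pv_def)

lemma pv'_supp: "k < r \<Longrightarrow> supp r v \<Longrightarrow> supp r (pv' k s v)"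
  by (auto simp: supp_def pv'_def)

lemma pv'_zero: "pv' k s (\<lambda>_. 0) = (\<lambda>_. 0)"
  by (rule ext) (simp add: pv'_def)


lemma unimod_zbasis: "supp r v \<Longrightarrow> unimodr r v \<Longrightarrow> \<exists>M. zbasis r M \<and> M 0 = v"
proof (induction "nat (\<Sum>i<r. \<bar>v i\<bar>)" arbitrary: v rule: less_induct)
  case less
  obtain n where n: "(\<Sum>i<r. n i * v i) = 1" using less.prems(2) unfolding unimodr_def by blast
  show ?case
  proof (cases "\<exists>i j. i < r \<and> j < r \<and> i \<noteq> j \<and> v i \<noteq> 0 \<and> v j \<noteq> 0 \<and> \<bar>v j\<bar> \<le> \<bar>v i\<bar>")
    case True
    then obtain i j where ij: "i < r" "j < r" "i \<noteq> j" "v i \<noteq> 0" "v j \<noteq> 0" "\<bar>v j\<bar> \<le> \<bar>v i\<bar>" by blast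
    define t where "t = - (sgn (v i) * sgn (v j))"
    define v' where "v' = tv i j t v"
    have absl: "\<bar>v i + t * v j\<bar> < \<bar>v i\<bar>"
      unfolding t_def using ij(4,5,6) by (cases "v i > 0"; cases "v j > 0") (auto simp: sgn_if)
    have le: "\<forall>l\<in>{..<r}. \<bar>v' l\<bar> \<le> \<bar>v l\<bar>" using absl by (auto simp: v'_def tv_def)
    have lt: "\<exists>l\<in>{..<r}. \<bar>v' l\<bar> < \<bar>v l\<bar>" using absl ij(1) by (intro bexI[of _ i]) (auto simp: v'_def tv_def)
    have a1: "(\<Sum>l<r. \<bar>v' l\<bar>) < (\<Sum>l<r. \<bar>v l\<bar>)" by (rule sum_strict_mono_ex1[OF _ le lt]) simp
    have a2: "0 \<le> (\<Sum>l<r. \<bar>v' l\<bar>)" by (rule sum_nonneg) simp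
    have meas: "nat (\<Sum>l<r. \<bar>v' l\<bar>) < nat (\<Sum>l<r. \<bar>v l\<bar>)" using a1 a2 by linarith
    have sv': "supp r v'" unfolding v'_def by (rule tv_supp[OF ij(1) less.prems(1)])
    define n' where "n' = n(j := n j - n i * t)"
    have trm: "n' l * v' l = n l * v l + (if l = i then n i * t * v j else 0) - (if l = j then n i * t * v j else 0)" for l
      using ij(3) by (auto simp: n'_def v'_def tv_def algebra_simps)
    have "(\<Sum>l<r. n' l * v' l) = (\<Sum>l<r. n l * v l) + (\<Sum>l<r. (if l = i then n i * t * v j else 0)) - (\<Sum>l<r. (if l = j then n i * t * v j else 0))"
      unfolding trm by (simp add: sum.distrib sum_subtractf)
    also have "\<dots> = 1" using n ij(1,2) by (simp add: sum.delta)
    finally have uv': "unimodr r v'" unfolding unimodr_def by blast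
    obtain M' where M': "zbasis r M'" "M' 0 = v'" using less.hyps[OF _ sv' uv'] meas by (auto simp: v'_def)
    have Z: "zbasis r (\<lambda>k. tv i j (- t) (M' k))"
    proof (rule zbasis_map[OF M'(1)])
      show "\<And>v. supp r v \<Longrightarrow> supp r (tv i j (- t) v)" by (rule tv_supp[OF ij(1)])
      show "\<And>v. supp r v \<Longrightarrow> supp r (tv i j t v)" by (rule tv_supp[OF ij(1)])
      show "\<And>v. supp r v \<Longrightarrow> tv i j t (tv i j (- t) v) = v" using tv_inv[OF ij(3), of "- t"] by simp
      show "\<And>v. supp r v \<Longrightarrow> tv i j (- t) (tv i j t v) = v" using tv_inv[OF ij(3)] by simp
      show "\<And>c N. tv i j (- t) (\<lambda>i. \<Sum>k<r. c k * N k i) = (\<lambda>ia. \<Sum>k<r. c k * tv i j (- t) (N k) ia)"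
        by (rule tv_lin)
      show "tv i j t (\<lambda>_. 0) = (\<lambda>_. 0)" by (rule tv_zero)
    qed
    moreover have "tv i j (- t) (M' 0) = v" using M'(2) tv_inv[OF ij(3)] by (simp add: v'_def)
    ultimately show ?thesis by blast
  next
    case False
    have "\<exists>k<r. v k \<noteq> 0"
    proof (rule ccontr)
      assume "\<not> (\<exists>k<r. v k \<noteq> 0)"
      then have "(\<Sum>i<r. n i * v i) = 0" by simp
      then show False using n by simp
    qed
    then obtain k where k: "k < r" "v k \<noteq> 0" by blast
    have oth: "l < r \<Longrightarrow> l \<noteq> k \<Longrightarrow> v l = 0" for l
    proof (rule ccontr)
      assume l: "l < r" "l \<noteq> k" "v l \<noteq> 0"
      show False
      proof (cases "\<bar>v l\<bar> \<le> \<bar>v k\<bar>")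
        case True then show False using False k l by blast
      next
        case False2: False
        then have "\<bar>v k\<bar> \<le> \<bar>v l\<bar>" by simp
        then show False using False k l by blast
      qed
    qed
    have "(\<Sum>i<r. n i * v i) = (\<Sum>i<r. if i = k then n k * v k else 0)"
      using oth by (intro sum.cong) auto
    also have "\<dots> = n k * v k" using k by (simp add: sum.delta)
    finally have "n k * v k = 1" using n by simp
    then have sv: "v k = 1 \<or> v k = -1" by (auto simp: zmult_eq_1_iff)
    define s where "s = v k"
    have ss: "s * s = 1" using sv by (auto simp: s_def)
    have Z: "zbasis r (\<lambda>m. pv k s (std m))"
    proof (rule zbasis_map[OF zbasis_std])
      show "\<And>v. supp r v \<Longrightarrow> supp r (pv k s v)" by (rule pv_supp[OF k(1)])
      show "\<And>v. supp r v \<Longrightarrow> supp r (pv' k s v)" by (rule pv'_supp[OF k(1)])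
      show "\<And>v. supp r v \<Longrightarrow> pv' k s (pv k s v) = v" by (rule pv_inv1[OF ss])
      show "\<And>v. supp r v \<Longrightarrow> pv k s (pv' k s v) = v" by (rule pv_inv2[OF ss])
      show "\<And>c N. pv k s (\<lambda>i. \<Sum>m<r. c m * N m i) = (\<lambda>i. \<Sum>m<r. c m * pv k s (N m) i)"
        by (rule pv_lin)
      show "pv' k s (\<lambda>_. 0) = (\<lambda>_. 0)" by (rule pv'_zero)
    qed
    moreover have "pv k s (std 0) = v"
    proof (rule ext)
      fix l
      show "pv k s (std 0) l = v l"
      proof (cases "l = k")
        case True then show ?thesis by (simp add: pv_def std_def s_def)
      next
        case False
        have vl: "v l = 0"
        proof (cases "l < r")
          case True then show ?thesis using oth False by simp
        next
          case False then show ?thesis using less.prems(1) by (simp add: supp_def)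
        qed
        have "pv k s (std 0) l = 0" using False k by (auto simp: pv_def std_def)
        then show ?thesis using vl by simp
      qed
    qed
    ultimately show ?thesis by blast
  qed
qed


context comm_group
begin

definition rep :: "'a set \<Rightarrow> 'a \<Rightarrow> ('a \<Rightarrow> int) \<Rightarrow> bool" where
  "rep B x k \<longleftrightarrow> (\<exists>S. finite S \<and> S \<subseteq> B \<and> (\<forall>s. s \<notin> S \<longrightarrow> k s = 0) \<and>
      x = finprod G (\<lambda>s. s [^] k s) S)"

lemma rep_extend:
  fixes k :: "'a \<Rightarrow> int"
  assumes "finite T" "S \<subseteq> T" "T \<subseteq> carrier G" "\<forall>s. s \<notin> S \<longrightarrow> k s = 0"
  shows "finprod G (\<lambda>s. s [^] k s) T = finprod G (\<lambda>s. s [^] k s) S"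
proof (rule finprod_mono_neutral_cong_right[OF assms(1,2)])
  show "\<And>i. i \<in> T - S \<Longrightarrow> i [^] k i = \<one>" using assms(4) by simp
  show "(\<lambda>s. s [^] k s) \<in> T \<rightarrow> carrier G" using assms(3) by (intro Pi_I int_pow_closed) auto
qed simp

lemma rep_on:
  assumes B: "B \<subseteq> carrier G" and r: "rep B x k" and T: "finite T" "T \<subseteq> B"
  shows "\<exists>S. finite S \<and> S \<subseteq> B \<and> T \<subseteq> S \<and> (\<forall>s. s \<notin> S \<longrightarrow> k s = 0) \<and>
      x = finprod G (\<lambda>s. s [^] k s) S"
proof -
  obtain S where S: "finite S" "S \<subseteq> B" "\<forall>s. s \<notin> S \<longrightarrow> k s = 0" "x = finprod G (\<lambda>s. s [^] k s) S"
    using r unfolding rep_def by blast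
  have "finprod G (\<lambda>s. s [^] k s) (S \<union> T) = finprod G (\<lambda>s. s [^] k s) S"
    by (rule rep_extend) (use S T B in auto)
  then show ?thesis using S T by (intro exI[of _ "S \<union> T"]) auto
qed

lemma rep_unique:
  assumes B: "abelian_basis G B" and r1: "rep B x k1" and r2: "rep B x k2"
  shows "k1 = k2"
proof -
  have Bc: "B \<subseteq> carrier G" using B by (simp add: abelian_basis_def)
  obtain S1 where S1: "finite S1" "S1 \<subseteq> B" "\<forall>s. s \<notin> S1 \<longrightarrow> k1 s = 0" "x = finprod G (\<lambda>s. s [^] k1 s) S1"
    using r1 unfolding rep_def by blast
  obtain S where S: "finite S" "S \<subseteq> B" "S1 \<subseteq> S" "\<forall>s. s \<notin> S \<longrightarrow> k2 s = 0" "x = finprod G (\<lambda>s. s [^] k2 s) S"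
    using rep_on[OF Bc r2 S1(1,2)] by blast
  have x1: "x = finprod G (\<lambda>s. s [^] k1 s) S"
    using rep_extend[of S S1 k1] S S1 Bc by auto
  have Sc: "S \<subseteq> carrier G" using S Bc by auto
  have pi: "\<And>k::'a \<Rightarrow> int. (\<lambda>s. s [^] k s) \<in> S \<rightarrow> carrier G" using Sc by (intro Pi_I int_pow_closed) auto
  have "finprod G (\<lambda>s. s [^] (k1 s - k2 s)) S \<otimes> finprod G (\<lambda>s. s [^] k2 s) S =
        finprod G (\<lambda>s. s [^] (k1 s - k2 s) \<otimes> s [^] k2 s) S"
    by (rule finprod_multf[symmetric]) (rule pi, rule pi)
  also have "\<dots> = finprod G (\<lambda>s. s [^] k1 s) S"
  proof (rule finprod_cong')
    show "(\<lambda>s. s [^] k1 s) \<in> S \<rightarrow> carrier G" by (rule pi)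
    fix s assume "s \<in> S"
    then have sc: "s \<in> carrier G" using Sc by auto
    have "s [^] (k1 s - k2 s + k2 s) = s [^] (k1 s - k2 s) \<otimes> s [^] k2 s" by (rule int_pow_mult[OF sc])
    then show "s [^] (k1 s - k2 s) \<otimes> s [^] k2 s = s [^] k1 s" by simp
  qed simp
  finally have eq: "finprod G (\<lambda>s. s [^] (k1 s - k2 s)) S \<otimes> x = x" using x1 S(5) by simp
  have xc: "x \<in> carrier G" using S(5) finprod_closed[OF pi[of k2]] by simp
  have Pc: "finprod G (\<lambda>s. s [^] (k1 s - k2 s)) S \<in> carrier G" by (rule finprod_closed[OF pi])
  have P1: "finprod G (\<lambda>s. s [^] (k1 s - k2 s)) S = \<one>"
    using eq r_cancel_one[OF xc Pc] by blast
  have ind: "\<forall>S (k :: 'a \<Rightarrow> int). finite S \<longrightarrow> S \<subseteq> B \<longrightarrow>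
        finprod G (\<lambda>s. s [^] k s) S = \<one> \<longrightarrow> (\<forall>s \<in> S. k s = 0)"
    using B by (simp add: abelian_basis_def)
  have z: "\<forall>s \<in> S. k1 s - k2 s = 0"
    using ind[rule_format, OF S(1) S(2) P1] by blast
  show ?thesis
  proof
    fix s
    show "k1 s = k2 s"
    proof (cases "s \<in> S")
      case True then show ?thesis using z by simp
    next
      case False then show ?thesis using S(3,4) S1(3) by auto
    qed
  qed
qed

lemma rep_exists:
  assumes Bc: "B \<subseteq> carrier G" and x: "x \<in> generate G B"
  shows "\<exists>k. rep B x k"
  using x
proof (induction rule: generate.induct)
  case one
  show ?case unfolding rep_def by (intro exI[of _ "\<lambda>_. 0"] exI[of _ "{}"]) simp
next
  case (incl h)
  then have hc: "h \<in> carrier G" using Bc by auto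
  have "finprod G (\<lambda>s. s [^] (if s = h then 1 else 0 :: int)) {h} = h" using hc by simp
  then show ?case unfolding rep_def using incl
    by (intro exI[of _ "\<lambda>s. if s = h then 1 else 0"] exI[of _ "{h}"]) auto
next
  case (inv h)
  then have hc: "h \<in> carrier G" using Bc by auto
  have "finprod G (\<lambda>s. s [^] (if s = h then - 1 else 0 :: int)) {h} = inv h"
    using hc by (simp add: int_pow_neg)
  then show ?case unfolding rep_def using inv
    by (intro exI[of _ "\<lambda>s. if s = h then - 1 else 0"] exI[of _ "{h}"]) auto
next
  case (eng h1 h2)
  obtain k1 where r1: "rep B h1 k1" using eng by blast
  obtain k2 where r2: "rep B h2 k2" using eng by blast
  obtain S1 where S1: "finite S1" "S1 \<subseteq> B" "\<forall>s. s \<notin> S1 \<longrightarrow> k1 s = 0" "h1 = finprod G (\<lambda>s. s [^] k1 s) S1"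
    using r1 unfolding rep_def by blast
  obtain S where S: "finite S" "S \<subseteq> B" "S1 \<subseteq> S" "\<forall>s. s \<notin> S \<longrightarrow> k2 s = 0" "h2 = finprod G (\<lambda>s. s [^] k2 s) S"
    using rep_on[OF Bc r2 S1(1,2)] by blast
  have x1: "h1 = finprod G (\<lambda>s. s [^] k1 s) S"
    using rep_extend[of S S1 k1] S S1 Bc by auto
  have Sc: "S \<subseteq> carrier G" using S Bc by auto
  have pi: "\<And>k::'a \<Rightarrow> int. (\<lambda>s. s [^] k s) \<in> S \<rightarrow> carrier G" using Sc by (intro Pi_I int_pow_closed) auto
  have "finprod G (\<lambda>s. s [^] (k1 s + k2 s)) S = finprod G (\<lambda>s. s [^] k1 s \<otimes> s [^] k2 s) S"
  proof (rule finprod_cong')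
    show "(\<lambda>s. s [^] k1 s \<otimes> s [^] k2 s) \<in> S \<rightarrow> carrier G" using Sc by (intro Pi_I m_closed int_pow_closed) auto
    fix s assume "s \<in> S"
    then have sc: "s \<in> carrier G" using Sc by auto
    show "s [^] (k1 s + k2 s) = s [^] k1 s \<otimes> s [^] k2 s" by (rule int_pow_mult[OF sc])
  qed simp
  also have "\<dots> = h1 \<otimes> h2" using x1 S(5) by (simp add: finprod_multf[OF pi pi])
  finally have "h1 \<otimes> h2 = finprod G (\<lambda>s. s [^] (k1 s + k2 s)) S" by simp
  moreover have "\<forall>s. s \<notin> S \<longrightarrow> k1 s + k2 s = 0" using S S1 by auto
  ultimately show ?case unfolding rep_def using S by (intro exI[of _ "\<lambda>s. k1 s + k2 s"] exI[of _ S]) auto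
qed

lemma basis_coord:
  assumes B: "abelian_basis G B" and b: "b \<in> B"
  shows "\<exists>\<phi> :: 'a \<Rightarrow> int. (\<forall>x\<in>carrier G. \<forall>z\<in>carrier G. \<phi> (x \<otimes> z) = \<phi> x + \<phi> z) \<and> \<phi> b = 1"
proof -
  have Bc: "B \<subseteq> carrier G" and gen: "generate G B = carrier G" using B by (auto simp: abelian_basis_def)
  define \<phi> where "\<phi> x = (THE k. rep B x k) b" for x
  have the: "rep B x k \<Longrightarrow> (THE k. rep B x k) = k" for x k
    using rep_unique[OF B] by blast
  have ex: "x \<in> carrier G \<Longrightarrow> \<exists>k. rep B x k" for x using rep_exists[OF Bc] gen by blast
  have hom: "\<forall>x\<in>carrier G. \<forall>z\<in>carrier G. \<phi> (x \<otimes> z) = \<phi> x + \<phi> z"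
  proof (intro ballI)
    fix x z assume x: "x \<in> carrier G" and z: "z \<in> carrier G"
    obtain k1 where k1: "rep B x k1" using ex[OF x] by blast
    obtain k2 where k2: "rep B z k2" using ex[OF z] by blast
    have "x \<otimes> z \<in> generate G B" using x z gen by simp
    then obtain k where k: "rep B (x \<otimes> z) k" using rep_exists[OF Bc] by blast
    have "k = (\<lambda>s. k1 s + k2 s)"
    proof -
      obtain S1 where S1: "finite S1" "S1 \<subseteq> B" "\<forall>s. s \<notin> S1 \<longrightarrow> k1 s = 0" "x = finprod G (\<lambda>s. s [^] k1 s) S1"
        using k1 unfolding rep_def by blast
      obtain S where S: "finite S" "S \<subseteq> B" "S1 \<subseteq> S" "\<forall>s. s \<notin> S \<longrightarrow> k2 s = 0" "z = finprod G (\<lambda>s. s [^] k2 s) S"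
        using rep_on[OF Bc k2 S1(1,2)] by blast
      have x1: "x = finprod G (\<lambda>s. s [^] k1 s) S"
        using rep_extend[of S S1 k1] S S1 Bc by auto
      have Sc: "S \<subseteq> carrier G" using S Bc by auto
      have pi: "\<And>k::'a \<Rightarrow> int. (\<lambda>s. s [^] k s) \<in> S \<rightarrow> carrier G" using Sc by (intro Pi_I int_pow_closed) auto
      have "finprod G (\<lambda>s. s [^] (k1 s + k2 s)) S = finprod G (\<lambda>s. s [^] k1 s \<otimes> s [^] k2 s) S"
      proof (rule finprod_cong')
        show "(\<lambda>s. s [^] k1 s \<otimes> s [^] k2 s) \<in> S \<rightarrow> carrier G" using Sc by (intro Pi_I m_closed int_pow_closed) auto
        fix s assume "s \<in> S"
        then have sc: "s \<in> carrier G" using Sc by auto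
        show "s [^] (k1 s + k2 s) = s [^] k1 s \<otimes> s [^] k2 s" by (rule int_pow_mult[OF sc])
      qed simp
      also have "\<dots> = x \<otimes> z" using x1 S(5) by (simp add: finprod_multf[OF pi pi])
      finally have "x \<otimes> z = finprod G (\<lambda>s. s [^] (k1 s + k2 s)) S" by simp
      moreover have "\<forall>s. s \<notin> S \<longrightarrow> k1 s + k2 s = 0" using S S1 by auto
      ultimately have "rep B (x \<otimes> z) (\<lambda>s. k1 s + k2 s)" unfolding rep_def using S by blast
      then show ?thesis using rep_unique[OF B k] by simp
    qed
    then show "\<phi> (x \<otimes> z) = \<phi> x + \<phi> z" unfolding \<phi>_def using the[OF k] the[OF k1] the[OF k2] by simp
  qed
  have bc: "b \<in> carrier G" using b Bc by auto
  have "finprod G (\<lambda>s. s [^] (if s = b then 1 else 0 :: int)) {b} = b" using bc by simp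
  then have "rep B b (\<lambda>s. if s = b then 1 else 0)" unfolding rep_def using b
    by (intro exI[of _ "{b}"]) auto
  then have "\<phi> b = 1" unfolding \<phi>_def using the by simp
  then show ?thesis using hom by blast
qed

end


declare mult_FactGroup[simp del]

lemma gcd_bezout_sum: "\<exists>n. (\<Sum>i<(r::nat). n i * (v i :: int)) = Gcd (v ` {..<r})"
proof (induction r)
  case 0 then show ?case by simp
next
  case (Suc r)
  then obtain n where n: "(\<Sum>i<r. n i * v i) = Gcd (v ` {..<r})" by blast
  obtain a b where ab: "a * v r + b * Gcd (v ` {..<r}) = gcd (v r) (Gcd (v ` {..<r}))"
    using bezout_int by blast
  define n' where "n' i = (if i = r then a else b * n i)" for i
  have "(\<Sum>i<Suc r. n' i * v i) = a * v r + b * (\<Sum>i<r. n i * v i)"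
    by (simp add: n'_def sum_distrib_left algebra_simps)
  also have "\<dots> = Gcd (v ` {..<Suc r})" using n ab by (simp add: lessThan_Suc Gcd_insert)
  finally show ?case by blast
qed

lemma eval_word_Nil[simp]: "eval_word G f [] = \<one>\<^bsub>G\<^esub>"
  by (simp add: eval_word_def)

lemma eval_word_Cons[simp]: "eval_word G f (l # w) =
   (if fst l then inv\<^bsub>G\<^esub> (f (snd l)) else f (snd l)) \<otimes>\<^bsub>G\<^esub> eval_word G f w"
  by (simp add: eval_word_def)

locale fsetup = group G for G :: "('a, 'b) monoid_scheme" (structure) +
  fixes r :: nat and y :: "nat \<Rightarrow> 'a" and eps :: "'a \<Rightarrow> nat \<Rightarrow> int"
  assumes y_closed: "i < r \<Longrightarrow> y i \<in> carrier G"
    and gen: "generate G (y ` {..<r}) = carrier G"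
    and eps_mult: "a \<in> carrier G \<Longrightarrow> b \<in> carrier G \<Longrightarrow> eps (a \<otimes> b) i = eps a i + eps b i"
    and eps_y: "i < r \<Longrightarrow> eps (y i) j = (if j = i then 1 else 0)"
    and eps_supp: "a \<in> carrier G \<Longrightarrow> r \<le> j \<Longrightarrow> eps a j = 0"
begin

definition unimod :: "(nat \<Rightarrow> int) \<Rightarrow> bool" where
  "unimod v \<longleftrightarrow> (\<exists>n. (\<Sum>i<r. n i * v i) = 1)"

lemma eps_one: "eps \<one> i = 0"
  using eps_mult[of \<one> \<one> i] by simp

lemma eps_inv: "a \<in> carrier G \<Longrightarrow> eps (inv a) i = - eps a i"
  using eps_mult[of "inv a" a i] by (simp add: eps_one)

lemma eps_nat_pow: "a \<in> carrier G \<Longrightarrow> eps (a [^] (n::nat)) i = int n * eps a i"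
proof (induction n)
  case 0 then show ?case by (simp add: eps_one)
next
  case (Suc n)
  have "eps (a [^] Suc n) i = eps (a [^] n \<otimes> a) i" by simp
  also have "\<dots> = eps (a [^] n) i + eps a i" using Suc.prems by (intro eps_mult) auto
  finally show ?case using Suc by (simp add: distrib_right)
qed

lemma eps_int_pow: "a \<in> carrier G \<Longrightarrow> eps (a [^] (k::int)) i = k * eps a i"
proof (cases "k < 0")
  case True
  assume a: "a \<in> carrier G"
  have "a [^] k = inv (a [^] nat (- k))" using True by (metis int_pow_def2)
  moreover have "eps (inv (a [^] nat (- k))) i = - eps (a [^] nat (- k)) i"
    by (rule eps_inv) (rule nat_pow_closed[OF a])
  moreover have "eps (a [^] nat (- k)) i = int (nat (- k)) * eps a i" by (rule eps_nat_pow[OF a])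
  ultimately show ?thesis using True by simp
next
  case False
  assume a: "a \<in> carrier G"
  have "a [^] k = a [^] nat k" using False by (metis int_pow_def2)
  moreover have "eps (a [^] nat k) i = int (nat k) * eps a i" by (rule eps_nat_pow[OF a])
  ultimately show ?thesis using False by simp
qed

lemma H_pow: "h \<in> carrier G \<Longrightarrow> x \<in> generate G {h} \<Longrightarrow> \<exists>k::int. x = h [^] k"
proof -
  assume h: "h \<in> carrier G" and x: "x \<in> generate G {h}"
  have "x \<in> {h [^] (k :: int) | k. k \<in> UNIV}" using x generate_pow[OF h] by blast
  then show ?thesis by blast
qed

lemma pow_in_H: "h \<in> carrier G \<Longrightarrow> h [^] (k::int) \<in> generate G {h}"
proof -
  assume h: "h \<in> carrier G"
  have "h [^] k \<in> {h [^] (k :: int) | k. k \<in> UNIV}" by blast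
  then show ?thesis using generate_pow[OF h] by blast
qed

lemma H_sub: "h \<in> carrier G \<Longrightarrow> generate G {h} \<subseteq> carrier G"
  by (rule generate_incl) simp

lemma H_comm: "h \<in> carrier G \<Longrightarrow> x \<in> generate G {h} \<Longrightarrow> z \<in> generate G {h} \<Longrightarrow> x \<otimes> z = z \<otimes> x"
proof -
  assume h: "h \<in> carrier G" and x: "x \<in> generate G {h}" and z: "z \<in> generate G {h}"
  obtain a b where "x = h [^] (a::int)" "z = h [^] (b::int)" using H_pow[OF h] x z by blast
  moreover have "h [^] (a + b) = h [^] a \<otimes> h [^] b" by (rule int_pow_mult[OF h])
  moreover have "h [^] (b + a) = h [^] b \<otimes> h [^] a" by (rule int_pow_mult[OF h])
  ultimately show ?thesis by (metis add.commute)
qed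

lemma hom_to_H:
  assumes h: "h \<in> carrier G" and rho: "rho \<in> hom G G" and img: "rho ` carrier G \<subseteq> generate G {h}"
  shows "\<exists>n. \<forall>x \<in> carrier G. rho x = h [^] (\<Sum>i<r. n i * eps x i)"
proof -
  interpret gh: group_hom G G rho using rho by (unfold_locales) simp
  have "\<forall>i. \<exists>k::int. i < r \<longrightarrow> rho (y i) = h [^] k"
  proof
    fix i
    show "\<exists>k::int. i < r \<longrightarrow> rho (y i) = h [^] k"
    proof (cases "i < r")
      case True
      then have "rho (y i) \<in> generate G {h}" using img y_closed by blast
      then obtain k where "rho (y i) = h [^] (k::int)" using H_pow[OF h] by blast
      then show ?thesis by blast
    qed simp
  qed
  then obtain n where n0: "\<forall>i. i < r \<longrightarrow> rho (y i) = h [^] (n i :: int)"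
    by (rule choice_iff[THEN iffD1, THEN exE]) blast
  then have n: "\<And>i. i < r \<Longrightarrow> rho (y i) = h [^] (n i :: int)" by blast
  define S where "S = {x \<in> carrier G. rho x = h [^] (\<Sum>i<r. n i * eps x i)}"
  have Sx: "x \<in> S \<longleftrightarrow> x \<in> carrier G \<and> rho x = h [^] (\<Sum>i<r. n i * eps x i)" for x
    by (simp add: S_def)
  have "subgroup S G"
  proof (rule subgroupI)
    show "S \<subseteq> carrier G" by (auto simp: S_def)
    have "\<one> \<in> S" by (simp add: S_def eps_one)
    then show "S \<noteq> {}" by auto
    fix a b assume a: "a \<in> S" and b: "b \<in> S"
    have ac: "a \<in> carrier G" and ra: "rho a = h [^] (\<Sum>i<r. n i * eps a i)" using a Sx by auto
    have bc: "b \<in> carrier G" and rb: "rho b = h [^] (\<Sum>i<r. n i * eps b i)" using b Sx by auto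
    have "rho (inv a) = inv (rho a)" using ac by simp
    also have "\<dots> = h [^] (- (\<Sum>i<r. n i * eps a i))" unfolding ra using h by (rule int_pow_neg[symmetric])
    also have "- (\<Sum>i<r. n i * eps a i) = (\<Sum>i<r. n i * eps (inv a) i)"
    proof -
      have "\<And>i. eps (inv a) i = - eps a i" using ac by (rule eps_inv)
      then show ?thesis by (simp add: sum_negf)
    qed
    finally have "rho (inv a) = h [^] (\<Sum>i<r. n i * eps (inv a) i)" .
    then show "inv a \<in> S" using Sx ac by blast
    have "rho (a \<otimes> b) = rho a \<otimes> rho b" using ac bc by simp
    also have "\<dots> = h [^] ((\<Sum>i<r. n i * eps a i) + (\<Sum>i<r. n i * eps b i))"
      unfolding ra rb using h by (rule int_pow_mult[symmetric])
    also have "(\<Sum>i<r. n i * eps a i) + (\<Sum>i<r. n i * eps b i) = (\<Sum>i<r. n i * eps (a \<otimes> b) i)"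
    proof -
      have "\<And>i. eps (a \<otimes> b) i = eps a i + eps b i" using ac bc by (rule eps_mult)
      then show ?thesis by (simp add: sum.distrib distrib_left)
    qed
    finally have "rho (a \<otimes> b) = h [^] (\<Sum>i<r. n i * eps (a \<otimes> b) i)" .
    then show "a \<otimes> b \<in> S" using Sx ac bc by blast
  qed
  moreover have "y ` {..<r} \<subseteq> S"
  proof
    fix x assume "x \<in> y ` {..<r}"
    then obtain i where i: "i < r" "x = y i" by auto
    have "(\<Sum>j<r. n j * eps (y i) j) = (\<Sum>j<r. if j = i then n j else 0)"
      using i by (intro sum.cong) (auto simp: eps_y)
    also have "\<dots> = n i" using i by (simp add: sum.delta)
    finally have "(\<Sum>j<r. n j * eps (y i) j) = n i" .
    then show "x \<in> S" using i n y_closed by (simp add: S_def)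
  qed
  ultimately have "generate G (y ` {..<r}) \<subseteq> S" by (rule generate_subgroup_incl[rotated])
  then have "\<forall>x \<in> carrier G. rho x = h [^] (\<Sum>i<r. n i * eps x i)" using gen unfolding S_def by blast
  then show ?thesis by blast
qed

lemma pow_one_eps: "h \<in> carrier G \<Longrightarrow> h [^] (k::int) = \<one> \<Longrightarrow> k * eps h i = 0"
  using eps_int_pow[of h k i] eps_one by simp

lemma retract_unimod:
  assumes h: "h \<in> carrier G" "h \<noteq> \<one>" and R: "retract (generate G {h}) G"
  shows "unimod (eps h)"
proof -
  obtain rho where rho: "rho \<in> hom G G" "rho ` carrier G \<subseteq> generate G {h}"
    "\<forall>x \<in> generate G {h}. rho x = x"
    using R by (auto simp: retract_def)
  obtain n where n: "\<forall>x \<in> carrier G. rho x = h [^] (\<Sum>i<r. n i * eps x i)"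
    using hom_to_H[OF h(1) rho(1,2)] by blast
  define t where "t = (\<Sum>i<r. n i * eps h i)"
  have hH: "h \<in> generate G {h}" by (rule generate.incl) simp
  have "h = rho h" using rho(3) hH by simp
  also have "\<dots> = h [^] t" using n h by (simp add: t_def)
  finally have "h = h [^] t" .
  then have "h [^] (t - 1) = \<one>" using h int_pow_diff by simp
  then have z: "\<And>i. (t - 1) * eps h i = 0" using pow_one_eps h by blast
  show ?thesis
  proof (cases "t = 1")
    case True then show ?thesis unfolding unimod_def t_def by blast
  next
    case False
    then have "\<And>i. eps h i = 0" using z by simp
    then have "t = 0" by (simp add: t_def)
    then have "h [^] (-1::int) = \<one>" using \<open>h [^] (t - 1) = \<one>\<close> by simp
    then have "inv h = \<one>" using h by (simp add: int_pow_neg)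
    then show ?thesis using h by (metis inv_inv one_closed inv_one)
  qed
qed

lemma unimod_retract:
  assumes h: "h \<in> carrier G" and U: "unimod (eps h)"
  shows "retract (generate G {h}) G"
proof -
  obtain n where n: "(\<Sum>i<r. n i * eps h i) = 1" using U unfolding unimod_def by blast
  define rho where "rho x = h [^] (\<Sum>i<r. n i * eps x i)" for x
  have hom: "rho \<in> hom G G"
  proof (rule homI)
    fix x assume "x \<in> carrier G" then show "rho x \<in> carrier G" using h by (simp add: rho_def)
  next
    fix x z assume x: "x \<in> carrier G" and z: "z \<in> carrier G"
    have "\<And>i. eps (x \<otimes> z) i = eps x i + eps z i" using x z by (rule eps_mult)
    then have "(\<Sum>i<r. n i * eps (x \<otimes> z) i) = (\<Sum>i<r. n i * eps x i) + (\<Sum>i<r. n i * eps z i)"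
      by (simp add: sum.distrib distrib_left)
    then show "rho (x \<otimes> z) = rho x \<otimes> rho z" using h by (simp add: rho_def int_pow_mult)
  qed
  have img: "rho ` carrier G \<subseteq> generate G {h}" using pow_in_H[OF h] by (auto simp: rho_def)
  have fix_: "\<forall>x \<in> generate G {h}. rho x = x"
  proof
    fix x assume "x \<in> generate G {h}"
    then obtain k where k: "x = h [^] (k::int)" using H_pow[OF h] by blast
    have "(\<Sum>i<r. n i * eps x i) = k * (\<Sum>i<r. n i * eps h i)"
      using k h by (simp add: eps_int_pow sum_distrib_left algebra_simps)
    then show "rho x = x" using n k by (simp add: rho_def)
  qed
  show ?thesis unfolding retract_def using H_sub[OF h] hom img fix_ by blast
qed

lemma eval_word_hom:
  assumes rho: "rho \<in> hom G G" and f: "\<forall>i. f i \<in> carrier G"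
  shows "rho (eval_word G f w) = eval_word G (rho \<circ> f) w \<and> eval_word G f w \<in> carrier G"
proof -
  interpret gh: group_hom G G rho using rho by (unfold_locales) simp
  show ?thesis using f by (induction w) (auto simp: eval_word_def)
qed

lemma retract_vc:
  assumes R: "retract Hs G" shows "verbally_closed Hs G"
  unfolding verbally_closed_def
proof (intro allI impI)
  fix w hh f
  assume hh: "hh \<in> Hs" and "\<exists>f. (\<forall>i. f i \<in> carrier G) \<and> eval_word G f w = hh"
  then obtain f where f: "\<forall>i. f i \<in> carrier G" "eval_word G f w = hh" by blast
  obtain rho where rho: "rho \<in> hom G G" "rho ` carrier G \<subseteq> Hs" "\<forall>x \<in> Hs. rho x = x"
    using R by (auto simp: retract_def)
  have "eval_word G (rho \<circ> f) w = rho (eval_word G f w)" using eval_word_hom[OF rho(1) f(1)] by simp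
  also have "\<dots> = hh" using f(2) rho(3) hh by simp
  finally have "eval_word G (rho \<circ> f) w = hh" .
  moreover have "\<forall>i. (rho \<circ> f) i \<in> Hs" using rho(2) f(1) by auto
  ultimately show "\<exists>f. (\<forall>i. f i \<in> Hs) \<and> eval_word G f w = hh" by blast
qed


subsection \<open>Abelianization\<close>

abbreviation DG where "DG \<equiv> derived G (carrier G)"
abbreviation AQ where "AQ \<equiv> G Mod DG"

lemma DG_normal: "DG \<lhd> G"
  by (rule derived_is_normal[OF normal_self])

lemma AQ_comm: "comm_group AQ"
  by (rule derived_quot_is_comm_group)

definition Yq :: "nat \<Rightarrow> 'a set" where "Yq i = DG #> y i"

definition Phi :: "(nat \<Rightarrow> int) \<Rightarrow> 'a set" where
  "Phi v = finprod AQ (\<lambda>i. Yq i [^]\<^bsub>AQ\<^esub> v i) {..<r}"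

lemma Yq_closed: "i < r \<Longrightarrow> Yq i \<in> carrier AQ"
  using y_closed by (auto simp: Yq_def carrier_FactGroup)

lemma pi_hom: "(\<lambda>x. DG #> x) \<in> hom G AQ"
  by (rule normal.r_coset_hom_Mod[OF DG_normal])

lemma Phi_closed: "Phi v \<in> carrier AQ"
proof -
  interpret A: comm_group AQ by (rule AQ_comm)
  show ?thesis unfolding Phi_def by (rule A.finprod_closed) (use Yq_closed in \<open>intro Pi_I A.int_pow_closed, auto\<close>)
qed

lemma Phi_add: "Phi (\<lambda>i. v i + w i) = Phi v \<otimes>\<^bsub>AQ\<^esub> Phi w"
proof -
  interpret A: comm_group AQ by (rule AQ_comm)
  have "Phi (\<lambda>i. v i + w i) = finprod AQ (\<lambda>i. Yq i [^]\<^bsub>AQ\<^esub> v i \<otimes>\<^bsub>AQ\<^esub> Yq i [^]\<^bsub>AQ\<^esub> w i) {..<r}"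
    unfolding Phi_def
  proof (rule A.finprod_cong')
    show "(\<lambda>i. Yq i [^]\<^bsub>AQ\<^esub> v i \<otimes>\<^bsub>AQ\<^esub> Yq i [^]\<^bsub>AQ\<^esub> w i) \<in> {..<r} \<rightarrow> carrier AQ"
      using Yq_closed by (intro Pi_I A.m_closed A.int_pow_closed) auto
    fix i assume "i \<in> {..<r}"
    then show "Yq i [^]\<^bsub>AQ\<^esub> (v i + w i) = Yq i [^]\<^bsub>AQ\<^esub> v i \<otimes>\<^bsub>AQ\<^esub> Yq i [^]\<^bsub>AQ\<^esub> w i"
      using Yq_closed by (intro A.int_pow_mult) auto
  qed simp
  also have "\<dots> = Phi v \<otimes>\<^bsub>AQ\<^esub> Phi w"
    unfolding Phi_def by (rule A.finprod_multf) (auto intro: Yq_closed)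
  finally show ?thesis .
qed

lemma Phi_zero: "Phi (\<lambda>i. 0) = \<one>\<^bsub>AQ\<^esub>"
proof -
  interpret A: comm_group AQ by (rule AQ_comm)
  show ?thesis unfolding Phi_def by (rule A.finprod_one_eqI) simp
qed

lemma Phi_neg: "Phi (\<lambda>i. - v i) = inv\<^bsub>AQ\<^esub> (Phi v)"
proof -
  interpret A: comm_group AQ by (rule AQ_comm)
  have "Phi (\<lambda>i. - v i) \<otimes>\<^bsub>AQ\<^esub> Phi v = \<one>\<^bsub>AQ\<^esub>"
    using Phi_add[of "\<lambda>i. - v i" v] Phi_zero by simp
  then show ?thesis using A.inv_equality Phi_closed by metis
qed

lemma Phi_delta: "i < r \<Longrightarrow> Phi (\<lambda>j. if j = i then 1 else 0) = Yq i"
proof -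
  interpret A: comm_group AQ by (rule AQ_comm)
  assume i: "i < r"
  have "Phi (\<lambda>j. if j = i then 1 else 0) = (\<Otimes>\<^bsub>AQ\<^esub>j\<in>{..<r}. if j = i then Yq j else \<one>\<^bsub>AQ\<^esub>)"
    unfolding Phi_def
  proof (rule A.finprod_cong')
    show "(\<lambda>j. if j = i then Yq j else \<one>\<^bsub>AQ\<^esub>) \<in> {..<r} \<rightarrow> carrier AQ"
      using Yq_closed A.one_closed by (intro Pi_I) (auto simp del: one_FactGroup)
    fix j assume "j \<in> {..<r}"
    then show "Yq j [^]\<^bsub>AQ\<^esub> (if j = i then 1 else 0 :: int) = (if j = i then Yq j else \<one>\<^bsub>AQ\<^esub>)"
      using Yq_closed by (auto simp del: one_FactGroup)
  qed simp
  also have "\<dots> = Yq i" by (rule A.finprod_singleton_swap) (use i Yq_closed in auto)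
  finally show ?thesis .
qed

lemma eps_fun_mult: "a \<in> carrier G \<Longrightarrow> b \<in> carrier G \<Longrightarrow> eps (a \<otimes> b) = (\<lambda>i. eps a i + eps b i)"
  by (rule ext) (rule eps_mult)

lemma eps_fun_inv: "a \<in> carrier G \<Longrightarrow> eps (inv a) = (\<lambda>i. - eps a i)"
  by (rule ext) (rule eps_inv)

lemma coset_Phi: "x \<in> carrier G \<Longrightarrow> DG #> x = Phi (eps x)"
proof -
  interpret A: comm_group AQ by (rule AQ_comm)
  interpret pi: group_hom G AQ "\<lambda>x. DG #> x" using pi_hom by unfold_locales simp
  define S where "S = {x \<in> carrier G. DG #> x = Phi (eps x)}"
  have Sx: "x \<in> S \<longleftrightarrow> x \<in> carrier G \<and> DG #> x = Phi (eps x)" for x by (simp add: S_def)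
  have "subgroup S G"
  proof (rule subgroupI)
    show "S \<subseteq> carrier G" by (auto simp: S_def)
    have "eps \<one> = (\<lambda>i. 0)" by (rule ext) (rule eps_one)
    then have "DG #> \<one> = Phi (eps \<one>)" using pi.hom_one Phi_zero by simp
    then show "S \<noteq> {}" using Sx by blast
    fix a b assume a: "a \<in> S" and b: "b \<in> S"
    have ac: "a \<in> carrier G" and pa: "DG #> a = Phi (eps a)" using a Sx by auto
    have bc: "b \<in> carrier G" and pb: "DG #> b = Phi (eps b)" using b Sx by auto
    have "DG #> inv a = inv\<^bsub>AQ\<^esub> (DG #> a)" using ac by (rule pi.hom_inv)
    also have "\<dots> = Phi (eps (inv a))" unfolding pa eps_fun_inv[OF ac] Phi_neg ..
    finally show "inv a \<in> S" using Sx ac by blast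
    have "DG #> (a \<otimes> b) = (DG #> a) \<otimes>\<^bsub>AQ\<^esub> (DG #> b)" using ac bc by (rule pi.hom_mult)
    also have "\<dots> = Phi (eps (a \<otimes> b))" unfolding pa pb eps_fun_mult[OF ac bc] Phi_add ..
    finally show "a \<otimes> b \<in> S" using Sx ac bc by blast
  qed
  moreover have "y ` {..<r} \<subseteq> S"
  proof
    fix x assume "x \<in> y ` {..<r}"
    then obtain i where i: "i < r" "x = y i" by auto
    have "eps (y i) = (\<lambda>j. if j = i then 1 else 0)" by (rule ext) (rule eps_y[OF i(1)])
    then have "DG #> y i = Phi (eps (y i))" using Phi_delta[OF i(1)] by (simp add: Yq_def)
    then show "x \<in> S" using Sx i y_closed by blast
  qed
  ultimately have "generate G (y ` {..<r}) \<subseteq> S" by (rule generate_subgroup_incl[rotated])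
  then show "x \<in> carrier G \<Longrightarrow> DG #> x = Phi (eps x)" using gen Sx by blast
qed

lemma ker_DG: "x \<in> carrier G \<Longrightarrow> (\<And>i. eps x i = 0) \<Longrightarrow> x \<in> DG"
proof -
  assume x: "x \<in> carrier G" and e: "\<And>i. eps x i = 0"
  have "eps x = (\<lambda>i. 0)" using e by (rule ext)
  then have "DG #> x = DG" using coset_Phi[OF x] Phi_zero by simp
  moreover have "x \<in> DG #> x"
    by (rule rcos_self[OF x]) (rule normal.axioms(1)[OF DG_normal])
  ultimately show ?thesis by simp
qed

subsection \<open>Commutator words\<close>

fun cprod :: "('a \<times> 'a) list \<Rightarrow> 'a" where
  "cprod [] = \<one>"
| "cprod ((a, b) # cs) = (a \<otimes> b \<otimes> inv a \<otimes> inv b) \<otimes> cprod cs"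

lemma cprod_closed: "set cs \<subseteq> carrier G \<times> carrier G \<Longrightarrow> cprod cs \<in> carrier G"
  by (induction cs rule: cprod.induct) auto

lemma cprod_append: "set cs \<subseteq> carrier G \<times> carrier G \<Longrightarrow> set ds \<subseteq> carrier G \<times> carrier G \<Longrightarrow>
    cprod (cs @ ds) = cprod cs \<otimes> cprod ds"
  by (induction cs rule: cprod.induct) (auto simp: m_assoc cprod_closed)

lemma comm_inv: "a \<in> carrier G \<Longrightarrow> b \<in> carrier G \<Longrightarrow>
   inv (a \<otimes> b \<otimes> inv a \<otimes> inv b) = b \<otimes> a \<otimes> inv b \<otimes> inv a"
  by (simp add: inv_mult_group m_assoc)

lemma DG_cprod: "x \<in> DG \<Longrightarrow> \<exists>cs. set cs \<subseteq> carrier G \<times> carrier G \<and> x = cprod cs"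
  unfolding derived_def
proof (induction rule: generate.induct)
  case one
  show ?case by (rule exI[of _ "[]"]) simp
next
  case (incl h)
  then obtain a b where ab: "a \<in> carrier G" "b \<in> carrier G" "h = a \<otimes> b \<otimes> inv a \<otimes> inv b" by blast
  show ?case by (rule exI[of _ "[(a, b)]"]) (use ab in simp)
next
  case (inv h)
  then obtain a b where ab: "a \<in> carrier G" "b \<in> carrier G" "h = a \<otimes> b \<otimes> inv a \<otimes> inv b" by blast
  show ?case by (rule exI[of _ "[(b, a)]"]) (use ab comm_inv in simp)
next
  case (eng h1 h2)
  then obtain cs ds where "set cs \<subseteq> carrier G \<times> carrier G" "h1 = cprod cs"
    "set ds \<subseteq> carrier G \<times> carrier G" "h2 = cprod ds" by blast
  then show ?case by (intro exI[of _ "cs @ ds"]) (simp add: cprod_append)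
qed

fun cwd :: "nat \<Rightarrow> nat \<Rightarrow> letter list" where
  "cwd m 0 = []"
| "cwd m (Suc k) = [(False, m), (False, Suc m), (True, m), (True, Suc m)] @ cwd (Suc (Suc m)) k"

fun cfa :: "nat \<Rightarrow> ('a \<times> 'a) list \<Rightarrow> nat \<Rightarrow> 'a" where
  "cfa m [] = (\<lambda>_. \<one>)"
| "cfa m ((a, b) # cs) = (cfa (Suc (Suc m)) cs)(m := a, Suc m := b)"

lemma cwd_vars: "l \<in> set (cwd m k) \<Longrightarrow> m \<le> snd l"
  by (induction m k rule: cwd.induct) auto

lemma cfa_closed: "set cs \<subseteq> carrier G \<times> carrier G \<Longrightarrow> cfa m cs i \<in> carrier G"
  by (induction m cs arbitrary: i rule: cfa.induct) auto

lemma eval_word_cong: "(\<And>l. l \<in> set w \<Longrightarrow> f (snd l) = g (snd l)) \<Longrightarrow> eval_word G f w = eval_word G g w"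
  by (induction w) auto

lemma eval_word_closed: "(\<And>i. f i \<in> carrier G) \<Longrightarrow> eval_word G f w \<in> carrier G"
  by (induction w) auto

lemma eval_word_append: "(\<And>i. f i \<in> carrier G) \<Longrightarrow>
    eval_word G f (u @ v) = eval_word G f u \<otimes> eval_word G f v"
  by (induction u) (auto simp: m_assoc eval_word_closed)

lemma eval_word_replicate: "f i \<in> carrier G \<Longrightarrow> eval_word G f (replicate n (False, i)) = f i [^] n"
proof (induction n)
  case (Suc n)
  have "eval_word G f (replicate (Suc n) (False, i)) = f i \<otimes> eval_word G f (replicate n (False, i))" by simp
  also have "\<dots> = f i \<otimes> f i [^] n" using Suc by simp
  also have "\<dots> = f i [^] Suc n" using Suc.prems by (rule nat_pow_Suc2[symmetric])
  finally show ?case .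
qed simp

lemma eval_cwd: "set cs \<subseteq> carrier G \<times> carrier G \<Longrightarrow> eval_word G (cfa m cs) (cwd m (length cs)) = cprod cs"
proof (induction m cs rule: cfa.induct)
  case (1 m) then show ?case by simp
next
  case (2 m a b cs)
  have ab: "a \<in> carrier G" "b \<in> carrier G" and cs: "set cs \<subseteq> carrier G \<times> carrier G" using "2.prems" by auto
  let ?f = "cfa m ((a, b) # cs)"
  have fc: "\<And>i. ?f i \<in> carrier G" using "2.prems" by (rule cfa_closed)
  have "eval_word G ?f (cwd (Suc (Suc m)) (length cs)) = eval_word G (cfa (Suc (Suc m)) cs) (cwd (Suc (Suc m)) (length cs))"
    by (rule eval_word_cong) (auto dest: cwd_vars)
  also have "\<dots> = cprod cs" using "2.IH" cs by simp
  finally have tl: "eval_word G ?f (cwd (Suc (Suc m)) (length cs)) = cprod cs" .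
  have "eval_word G ?f (cwd m (length ((a, b) # cs))) =
     eval_word G ?f [(False, m), (False, Suc m), (True, m), (True, Suc m)] \<otimes> eval_word G ?f (cwd (Suc (Suc m)) (length cs))"
    by (simp only: length_Cons cwd.simps eval_word_append[OF fc])
  also have "eval_word G ?f [(False, m), (False, Suc m), (True, m), (True, Suc m)] = a \<otimes> b \<otimes> inv a \<otimes> inv b"
    using ab by (simp add: m_assoc)
  finally have "eval_word G ?f (cwd m (length ((a, b) # cs))) = a \<otimes> b \<otimes> inv a \<otimes> inv b \<otimes> eval_word G ?f (cwd (Suc (Suc m)) (length cs))" .
  then show ?case by (simp only: tl cprod.simps)
qed

lemma eval_cwd_comm:
  assumes f: "\<And>i. f i \<in> carrier G" and c: "\<And>i j. f i \<otimes> f j = f j \<otimes> f i"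
  shows "eval_word G f (cwd m k) = \<one>"
proof (induction m k rule: cwd.induct)
  case (1 m) then show ?case by simp
next
  case (2 m k)
  have "eval_word G f [(False, m), (False, Suc m), (True, m), (True, Suc m)] = f m \<otimes> f (Suc m) \<otimes> inv (f m) \<otimes> inv (f (Suc m))"
    using f by (simp add: m_assoc)
  also have "\<dots> = f (Suc m) \<otimes> f m \<otimes> inv (f m) \<otimes> inv (f (Suc m))" using c by simp
  also have "\<dots> = \<one>" using f by (simp add: m_assoc)
  finally show ?case using "2.IH" f by (simp add: eval_word_append)
qed

lemma lift_exists: "k \<le> r \<Longrightarrow> \<exists>z \<in> carrier G. \<forall>i. eps z i = (if i < k then u i else 0)"
proof (induction k)
  case 0
  show ?case by (intro bexI[of _ \<one>]) (auto simp: eps_one)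
next
  case (Suc k)
  then obtain z where z: "z \<in> carrier G" "\<forall>i. eps z i = (if i < k then u i else 0)" by auto
  have yk: "y k \<in> carrier G" using Suc.prems y_closed by simp
  have "\<forall>i. eps (z \<otimes> y k [^] u k) i = (if i < Suc k then u i else 0)"
  proof
    fix i
    have "eps (z \<otimes> y k [^] u k) i = eps z i + eps (y k [^] u k) i" using z yk by (intro eps_mult) auto
    also have "\<dots> = eps z i + u k * eps (y k) i" using yk by (simp add: eps_int_pow)
    finally show "eps (z \<otimes> y k [^] u k) i = (if i < Suc k then u i else 0)"
      using z(2) Suc.prems by (auto simp: eps_y less_Suc_eq)
  qed
  moreover have "z \<otimes> y k [^] u k \<in> carrier G" using z yk by simp
  ultimately show ?case by blast
qed


lemma vc_unimod:
  assumes h: "h \<in> carrier G" "h \<noteq> \<one>" and VC: "verbally_closed (generate G {h}) G"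
  shows "unimod (eps h)"
proof (rule ccontr)
  assume nu: "\<not> unimod (eps h)"
  define g where "g = Gcd (eps h ` {..<r})"
  obtain n where n: "(\<Sum>i<r. n i * eps h i) = g" unfolding g_def using gcd_bezout_sum by blast
  have g1: "g \<noteq> 1" using n nu unfolding unimod_def by blast
  have g0: "g \<ge> 0" unfolding g_def by (rule Gcd_int_greater_eq_0)
  have gd: "\<And>i. i < r \<Longrightarrow> g dvd eps h i" unfolding g_def by (rule Gcd_dvd) auto
  obtain z where z: "z \<in> carrier G" "\<forall>i. eps z i = (if i < r then eps h i div g else 0)"
    using lift_exists[of r "\<lambda>i. eps h i div g"] by auto
  have ezg: "eps (z [^] g) i = eps h i" for i
  proof (cases "i < r")
    case True
    have "eps (z [^] g) i = g * (eps h i div g)" using z True by (simp add: eps_int_pow)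
    also have "\<dots> = eps h i"
    proof (cases "g = 0")
      case True then show ?thesis using gd \<open>i < r\<close> by simp
    next
      case False then show ?thesis using gd \<open>i < r\<close> by simp
    qed
    finally show ?thesis .
  next
    case False
    then show ?thesis using z h by (simp add: eps_int_pow eps_supp)
  qed
  define c where "c = inv (z [^] g) \<otimes> h"
  have cc: "c \<in> carrier G" using z h by (simp add: c_def)
  have "eps c i = 0" for i
  proof -
    have "eps c i = eps (inv (z [^] g)) i + eps h i" unfolding c_def using z h by (intro eps_mult) auto
    also have "\<dots> = 0" using z by (simp add: eps_inv ezg)
    finally show ?thesis .
  qed
  then have "c \<in> DG" using ker_DG cc by blast
  then obtain cs where cs: "set cs \<subseteq> carrier G \<times> carrier G" "c = cprod cs" using DG_cprod by blast
  have hzc: "h = z [^] g \<otimes> c" using z h by (simp add: c_def m_assoc[symmetric])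
  define w where "w = replicate (nat g) (False, 0) @ cwd 1 (length cs)"
  define F where "F = (cfa 1 cs)(0 := z)"
  have Fc: "\<And>i. F i \<in> carrier G" using cfa_closed[OF cs(1)] z by (simp add: F_def)
  have "eval_word G F w = F 0 [^] nat g \<otimes> eval_word G F (cwd 1 (length cs))"
    unfolding w_def by (simp add: eval_word_append[OF Fc] eval_word_replicate[OF Fc])
  also have "eval_word G F (cwd 1 (length cs)) = eval_word G (cfa 1 cs) (cwd 1 (length cs))"
    by (rule eval_word_cong) (auto simp: F_def dest: cwd_vars)
  also have "\<dots> = c" using eval_cwd[OF cs(1), of 1] cs(2) by simp
  also have "F 0 [^] nat g = z [^] g"
  proof -
    have ig: "int (nat g) = g" using g0 by simp
    have "F 0 = z" by (simp add: F_def)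
    then show ?thesis using int_pow_int[of G z "nat g"] ig by metis
  qed
  finally have evF: "eval_word G F w = h" using hzc by simp
  have hH: "h \<in> generate G {h}" by (rule generate.incl) simp
  have ex: "\<exists>f. (\<forall>i. f i \<in> carrier G) \<and> eval_word G f w = h" using Fc evF by blast
  obtain f where f: "\<forall>i. f i \<in> generate G {h}" "eval_word G f w = h"
    using VC[unfolded verbally_closed_def, rule_format, OF hH ex] by blast
  have fc: "\<And>i. f i \<in> carrier G" using f(1) H_sub[OF h(1)] by blast
  have fcomm: "\<And>i j. f i \<otimes> f j = f j \<otimes> f i" using f(1) H_comm[OF h(1)] by blast
  obtain a where a: "f 0 = h [^] (a::int)" using H_pow[OF h(1)] f(1) by blast
  have "eval_word G f w = f 0 [^] nat g \<otimes> eval_word G f (cwd 1 (length cs))"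
    unfolding w_def by (simp add: eval_word_append[OF fc] eval_word_replicate[OF fc])
  also have "eval_word G f (cwd 1 (length cs)) = \<one>" by (rule eval_cwd_comm[OF fc fcomm])
  also have "f 0 [^] nat g = (h [^] a) [^] g"
  proof -
    have ig: "int (nat g) = g" using g0 by simp
    then show ?thesis using int_pow_int[of G "h [^] a" "nat g"] a by metis
  qed
  also have "\<dots> = h [^] (a * g)" using h(1) by (rule int_pow_pow)
  finally have "h [^] (a * g) = h" using f(2) h(1) by simp
  then have p1: "h [^] (a * g - 1) = \<one>" using h(1) int_pow_diff by simp
  have ag: "a * g \<noteq> 1"
  proof
    assume "a * g = 1"
    then have "g dvd 1" by (metis dvdI mult.commute)
    then show False using g0 g1 by simp
  qed
  have "(a * g - 1) * eps h i = 0" for i using pow_one_eps[OF h(1) p1] .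
  then have "eps h i = 0" for i using ag by simp
  then have "g = 0" using n by simp
  then have "h [^] (-1 :: int) = \<one>" using p1 by simp
  then have "inv h = \<one>" using h(1) by (simp add: int_pow_neg)
  then show False using h by (metis inv_inv one_closed inv_one)
qed

end


lemma zbasis_inj: "zbasis r M \<Longrightarrow> j < r \<Longrightarrow> l < r \<Longrightarrow> M j = M l \<Longrightarrow> j = l"
proof (rule ccontr)
  assume Z: "zbasis r M" and jl: "j < r" "l < r" "M j = M l" "j \<noteq> l"
  define c where "c k = (if k = j then 1 else if k = l then -1 else 0 :: int)" for k
  have "(\<Sum>k<r. c k * M k i) = M j i - M l i" for i
  proof -
    have "(\<Sum>k<r. c k * M k i) = (\<Sum>k<r. (if k = j then M j i else 0) - (if k = l then M l i else 0))"
      using jl by (intro sum.cong) (auto simp: c_def)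
    also have "\<dots> = M j i - M l i" using jl by (simp add: sum_subtractf sum.delta)
    finally show ?thesis .
  qed
  then have "\<forall>i. (\<Sum>k<r. c k * M k i) = 0" using jl by simp
  then have "c j = 0" using Z jl unfolding zbasis_def by blast
  then show False by (simp add: c_def)
qed

lemma (in group) finprod_in_subgroup:
  assumes cg: "comm_group G" and H: "subgroup H G" and S: "finite S" and f: "\<forall>s\<in>S. f s \<in> H"
  shows "finprod G f S \<in> H"
  using S f
proof (induction S rule: finite_induct)
  interpret comm_group G by (rule cg)
  case empty then show ?case using subgroup.one_closed[OF H] by simp
next
  interpret comm_group G by (rule cg)
  case (insert a S)
  have fc: "f \<in> S \<rightarrow> carrier G" "f a \<in> carrier G" using insert.prems subgroup.subset[OF H] by auto
  have "finprod G f (insert a S) = f a \<otimes> finprod G f S" by (rule finprod_insert[OF insert.hyps fc])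
  then show ?case using insert subgroup.m_closed[OF H] by simp
qed

context fsetup
begin

definition eA :: "'a set \<Rightarrow> nat \<Rightarrow> int" where "eA a = eps (SOME x. x \<in> a)"

lemma DG_ker: "x \<in> DG \<Longrightarrow> eps x i = 0"
proof -
  define K where "K = {x \<in> carrier G. \<forall>i. eps x i = 0}"
  have sK: "subgroup K G"
  proof (rule subgroupI)
    show "K \<subseteq> carrier G" by (auto simp: K_def)
    have "\<one> \<in> K" by (simp add: K_def eps_one)
    then show "K \<noteq> {}" by auto
    fix a b assume a: "a \<in> K" and b: "b \<in> K"
    show "inv a \<in> K" using a eps_inv by (simp add: K_def)
    show "a \<otimes> b \<in> K" using a b eps_mult by (simp add: K_def)
  qed
  have "derived_set G (carrier G) \<subseteq> K"
  proof
    fix x assume "x \<in> derived_set G (carrier G)"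
    then obtain a b where ab: "a \<in> carrier G" "b \<in> carrier G" "x = a \<otimes> b \<otimes> inv a \<otimes> inv b" by blast
    have "eps x i = 0" for i
    proof -
      have "eps x i = eps a i + eps b i + eps (inv a) i + eps (inv b) i"
        using ab by (simp add: eps_mult)
      then show ?thesis using ab by (simp add: eps_inv)
    qed
    then show "x \<in> K" using ab by (simp add: K_def)
  qed
  then have "DG \<subseteq> K" unfolding derived_def by (rule generate_subgroup_incl[OF _ sK])
  then show "x \<in> DG \<Longrightarrow> eps x i = 0" by (auto simp: K_def)
qed

lemma eA_coset: "x \<in> carrier G \<Longrightarrow> eA (DG #> x) = eps x"
proof -
  assume x: "x \<in> carrier G"
  have sD: "subgroup DG G" by (rule normal.axioms(1)[OF DG_normal])
  have "x \<in> DG #> x" by (rule rcos_self[OF x sD])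
  then have "(SOME x'. x' \<in> DG #> x) \<in> DG #> x" by (rule someI)
  then obtain d where d: "d \<in> DG" "(SOME x'. x' \<in> DG #> x) = d \<otimes> x" by (auto simp: r_coset_def)
  have dc: "d \<in> carrier G" using d(1) subgroup.subset[OF sD] by auto
  show ?thesis
  proof
    fix i
    have "eA (DG #> x) i = eps (d \<otimes> x) i" by (simp add: eA_def d(2))
    also have "\<dots> = eps d i + eps x i" using dc x by (rule eps_mult)
    finally show "eA (DG #> x) i = eps x i" using DG_ker[OF d(1)] by simp
  qed
qed

lemma AQ_carrier: "a \<in> carrier AQ \<Longrightarrow> \<exists>x \<in> carrier G. a = DG #> x"
  by (auto simp: carrier_FactGroup)

lemma eA_mult: "a \<in> carrier AQ \<Longrightarrow> c \<in> carrier AQ \<Longrightarrow> eA (a \<otimes>\<^bsub>AQ\<^esub> c) i = eA a i + eA c i"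
proof -
  interpret A: comm_group AQ by (rule AQ_comm)
  interpret pi: group_hom G AQ "\<lambda>x. DG #> x" using pi_hom by unfold_locales simp
  assume a: "a \<in> carrier AQ" and c: "c \<in> carrier AQ"
  obtain x z where xz: "x \<in> carrier G" "z \<in> carrier G" "a = DG #> x" "c = DG #> z"
    using AQ_carrier[OF a] AQ_carrier[OF c] by blast
  have e: "a \<otimes>\<^bsub>AQ\<^esub> c = DG #> (x \<otimes> z)" using xz pi.hom_mult[of x z] by simp
  have c1: "eA (DG #> (x \<otimes> z)) = eps (x \<otimes> z)" using xz by (intro eA_coset) simp
  have ca: "eA a = eps x" using xz(1,3) eA_coset by simp
  have cc: "eA c = eps z" using xz(2,4) eA_coset by simp
  have "eA (a \<otimes>\<^bsub>AQ\<^esub> c) i = eps (x \<otimes> z) i" unfolding e c1 ..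
  also have "\<dots> = eps x i + eps z i" using xz by (intro eps_mult) auto
  finally show ?thesis unfolding ca cc .
qed

lemma eA_pow: "a \<in> carrier AQ \<Longrightarrow> eA (a [^]\<^bsub>AQ\<^esub> (k::int)) i = k * eA a i"
proof -
  interpret A: comm_group AQ by (rule AQ_comm)
  interpret pi: group_hom G AQ "\<lambda>x. DG #> x" using pi_hom by unfold_locales simp
  assume a: "a \<in> carrier AQ"
  obtain x where x: "x \<in> carrier G" "a = DG #> x" using AQ_carrier[OF a] by blast
  have "a [^]\<^bsub>AQ\<^esub> k = DG #> (x [^] k)" using x pi.hom_int_pow by simp
  then show ?thesis using x by (simp add: eA_coset eps_int_pow)
qed

lemma eA_one: "eA \<one>\<^bsub>AQ\<^esub> i = 0"
proof -
  have e: "eA (DG #> \<one>) = eps \<one>" by (rule eA_coset) simp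
  have "DG #> \<one> = DG" using subgroup.subset[OF normal.axioms(1)[OF DG_normal]] by (rule coset_mult_one)
  then have "eA DG = eps \<one>" using e by simp
  then have "eA DG i = 0" using eps_one by metis
  then show ?thesis by simp
qed

lemma eA_DG: "eA DG i = 0"
  using eA_one by simp

lemma eA_finprod: "finite S \<Longrightarrow> f \<in> S \<rightarrow> carrier AQ \<Longrightarrow> eA (finprod AQ f S) i = (\<Sum>s\<in>S. eA (f s) i)"
proof (induction S rule: finite_induct)
  interpret A: comm_group AQ by (rule AQ_comm)
  case empty then show ?case by (simp add: eA_DG)
next
  interpret A: comm_group AQ by (rule AQ_comm)
  case (insert a S)
  have fc: "f \<in> S \<rightarrow> carrier AQ" "f a \<in> carrier AQ" using insert.prems by auto
  have "finprod AQ f (insert a S) = f a \<otimes>\<^bsub>AQ\<^esub> finprod AQ f S" by (rule A.finprod_insert[OF insert.hyps fc])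
  then have "eA (finprod AQ f (insert a S)) i = eA (f a) i + eA (finprod AQ f S) i"
    using eA_mult[OF fc(2) A.finprod_closed[OF fc(1)]] by simp
  then show ?case using insert by simp
qed

lemma Phi_eA: "a \<in> carrier AQ \<Longrightarrow> Phi (eA a) = a"
proof -
  assume a: "a \<in> carrier AQ"
  obtain x where x: "x \<in> carrier G" "a = DG #> x" using AQ_carrier[OF a] by blast
  have "eA a = eps x" using x eA_coset by simp
  then show ?thesis using coset_Phi[OF x(1)] x(2) by simp
qed

lemma eA_Phi: "supp r v \<Longrightarrow> eA (Phi v) = v"
proof -
  assume v: "supp r v"
  obtain z where z: "z \<in> carrier G" "\<forall>i. eps z i = (if i < r then v i else 0)"
    using lift_exists[of r v] by auto
  have "eps z = v" using z(2) v by (intro ext) (auto simp: supp_def)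
  then have "Phi v = DG #> z" using coset_Phi[OF z(1)] by simp
  then show ?thesis using eA_coset[OF z(1)] \<open>eps z = v\<close> by simp
qed

lemma eA_inj: "a \<in> carrier AQ \<Longrightarrow> c \<in> carrier AQ \<Longrightarrow> eA a = eA c \<Longrightarrow> a = c"
  using Phi_eA by metis

lemma eA_supp: "a \<in> carrier AQ \<Longrightarrow> supp r (eA a)"
proof -
  assume a: "a \<in> carrier AQ"
  obtain x where x: "x \<in> carrier G" "a = DG #> x" using AQ_carrier[OF a] by blast
  then show ?thesis using eps_supp by (simp add: eA_coset supp_def)
qed

lemma unimod_prim:
  assumes h: "h \<in> carrier G" and U: "unimod (eps h)"
  shows "primitive AQ (DG #> h)"
proof -
  interpret A: comm_group AQ by (rule AQ_comm)
  have sv: "supp r (eps h)" using eps_supp[OF h] by (simp add: supp_def)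
  have uv: "unimodr r (eps h)" using U by (simp add: unimod_def unimodr_def)
  obtain M where M: "zbasis r M" "M 0 = eps h" using unimod_zbasis[OF sv uv] by blast
  have r0: "0 < r"
  proof (rule ccontr)
    assume "\<not> 0 < r"
    then have "r = 0" by simp
    then show False using U unfolding unimod_def by simp
  qed
  have sM: "\<And>k. k < r \<Longrightarrow> supp r (M k)" using M(1) by (simp add: zbasis_def)
  define B where "B = (\<lambda>k. Phi (M k)) ` {..<r}"
  have Bc: "B \<subseteq> carrier AQ" using Phi_closed by (auto simp: B_def)
  have "Phi (M 0) \<in> B" using r0 by (simp add: B_def)
  then have qB: "DG #> h \<in> B" using coset_Phi[OF h] M(2) by simp
  have gen: "generate AQ B = carrier AQ"
  proof
    show "generate AQ B \<subseteq> carrier AQ" by (rule A.generate_incl[OF Bc])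
  next
    show "carrier AQ \<subseteq> generate AQ B"
    proof
      fix a assume a: "a \<in> carrier AQ"
      obtain c where c: "\<forall>i. eA a i = (\<Sum>k<r. c k * M k i)"
        using M(1) eA_supp[OF a] unfolding zbasis_def by blast
      define b' where "b' = finprod AQ (\<lambda>k. Phi (M k) [^]\<^bsub>AQ\<^esub> c k) {..<r}"
      have pic: "(\<lambda>k. Phi (M k) [^]\<^bsub>AQ\<^esub> c k) \<in> {..<r} \<rightarrow> carrier AQ"
        using Phi_closed by (intro Pi_I A.int_pow_closed) auto
      have sg: "subgroup (generate AQ B) AQ" by (rule A.generate_is_subgroup[OF Bc])
      have "b' \<in> generate AQ B" unfolding b'_def
      proof (rule A.finprod_in_subgroup[OF AQ_comm sg])
        show "\<forall>s\<in>{..<r}. Phi (M s) [^]\<^bsub>AQ\<^esub> c s \<in> generate AQ B"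
        proof
          fix s assume "s \<in> {..<r}"
          then have "Phi (M s) \<in> generate AQ B" by (auto simp: B_def intro: generate.incl)
          then show "Phi (M s) [^]\<^bsub>AQ\<^esub> c s \<in> generate AQ B" by (rule A.subgroup_int_pow_closed[OF sg])
        qed
      qed simp
      moreover have "eA b' = eA a"
      proof
        fix i
        have "eA b' i = (\<Sum>k<r. eA (Phi (M k) [^]\<^bsub>AQ\<^esub> c k) i)" unfolding b'_def by (rule eA_finprod[OF _ pic]) simp
        also have "\<dots> = (\<Sum>k<r. c k * M k i)"
          by (intro sum.cong) (auto simp: eA_pow Phi_closed eA_Phi sM)
        finally show "eA b' i = eA a i" using c by simp
      qed
      moreover have "b' \<in> carrier AQ" unfolding b'_def by (rule A.finprod_closed[OF pic])
      ultimately show "a \<in> generate AQ B" using eA_inj[OF a] by metis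
    qed
  qed
  have ind: "\<forall>S (k :: 'a set \<Rightarrow> int). finite S \<longrightarrow> S \<subseteq> B \<longrightarrow>
        finprod AQ (\<lambda>s. s [^]\<^bsub>AQ\<^esub> k s) S = \<one>\<^bsub>AQ\<^esub> \<longrightarrow> (\<forall>s \<in> S. k s = 0)"
  proof (intro allI impI)
    fix S and k :: "'a set \<Rightarrow> int"
    assume S: "finite S" "S \<subseteq> B" and P: "finprod AQ (\<lambda>s. s [^]\<^bsub>AQ\<^esub> k s) S = \<one>\<^bsub>AQ\<^esub>"
    define J where "J = {j \<in> {..<r}. Phi (M j) \<in> S}"
    have injB: "inj_on (\<lambda>j. Phi (M j)) {..<r}"
    proof (rule inj_onI)
      fix j l assume "j \<in> {..<r}" "l \<in> {..<r}" "Phi (M j) = Phi (M l)"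
      then have "M j = M l" using eA_Phi sM by (metis lessThan_iff)
      then show "j = l" using zbasis_inj[OF M(1)] \<open>j \<in> {..<r}\<close> \<open>l \<in> {..<r}\<close> by simp
    qed
    have SJ: "S = (\<lambda>j. Phi (M j)) ` J" using S(2) by (auto simp: J_def B_def)
    have injJ: "inj_on (\<lambda>j. Phi (M j)) J" using injB by (rule inj_on_subset) (auto simp: J_def)
    have pS: "(\<lambda>s. s [^]\<^bsub>AQ\<^esub> k s) \<in> S \<rightarrow> carrier AQ"
      using S(2) Bc by (intro Pi_I A.int_pow_closed) auto
    define c where "c j = (if j \<in> J then k (Phi (M j)) else 0)" for j
    have "\<forall>i. (\<Sum>j<r. c j * M j i) = 0"
    proof
      fix i
      have "0 = eA (finprod AQ (\<lambda>s. s [^]\<^bsub>AQ\<^esub> k s) S) i" using P eA_one by simp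
      also have "\<dots> = (\<Sum>s\<in>S. eA (s [^]\<^bsub>AQ\<^esub> k s) i)" by (rule eA_finprod[OF S(1) pS])
      also have "\<dots> = (\<Sum>j\<in>J. eA (Phi (M j) [^]\<^bsub>AQ\<^esub> k (Phi (M j))) i)"
        unfolding SJ by (rule sum.reindex[OF injJ, unfolded comp_def])
      also have "\<dots> = (\<Sum>j\<in>J. k (Phi (M j)) * M j i)"
        by (intro sum.cong) (auto simp: eA_pow Phi_closed eA_Phi sM J_def)
      also have "\<dots> = (\<Sum>j<r. c j * M j i)"
      proof -
        have "(\<Sum>j<r. c j * M j i) = (\<Sum>j<r. if j \<in> J then k (Phi (M j)) * M j i else 0)"
          by (intro sum.cong) (auto simp: c_def)
        also have "\<dots> = (\<Sum>j\<in>{..<r} \<inter> J. k (Phi (M j)) * M j i)"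
          by (rule sum.inter_restrict[symmetric]) simp
        also have "{..<r} \<inter> J = J" by (auto simp: J_def)
        finally show ?thesis by simp
      qed
      finally show "(\<Sum>j<r. c j * M j i) = 0" by simp
    qed
    then have cz: "\<forall>j<r. c j = 0" using M(1) unfolding zbasis_def by blast
    show "\<forall>s\<in>S. k s = 0"
    proof
      fix s assume "s \<in> S"
      then obtain j where "j \<in> J" "s = Phi (M j)" using SJ by auto
      then show "k s = 0" using cz by (auto simp: c_def J_def)
    qed
  qed
  have "abelian_basis AQ B" unfolding abelian_basis_def using Bc gen ind by blast
  then show ?thesis unfolding primitive_def using qB by blast
qed

lemma prim_unimod:
  assumes h: "h \<in> carrier G" "h \<noteq> \<one>" and P: "primitive AQ (DG #> h)"
  shows "unimod (eps h)"
proof -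
  interpret A: comm_group AQ by (rule AQ_comm)
  interpret pi: group_hom G AQ "\<lambda>x. DG #> x" using pi_hom by unfold_locales simp
  obtain B where B: "abelian_basis AQ B" "DG #> h \<in> B" using P unfolding primitive_def by blast
  obtain \<phi> :: "'a set \<Rightarrow> int" where phi: "\<forall>x\<in>carrier AQ. \<forall>z\<in>carrier AQ. \<phi> (x \<otimes>\<^bsub>AQ\<^esub> z) = \<phi> x + \<phi> z"
      "\<phi> (DG #> h) = 1"
    using A.basis_coord[OF B] by blast
  define rho where "rho x = h [^] \<phi> (DG #> x)" for x
  have hom: "rho \<in> hom G G"
  proof (rule homI)
    fix x assume "x \<in> carrier G" then show "rho x \<in> carrier G" using h by (simp add: rho_def)
  next
    fix x z assume x: "x \<in> carrier G" and z: "z \<in> carrier G"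
    have "DG #> (x \<otimes> z) = (DG #> x) \<otimes>\<^bsub>AQ\<^esub> (DG #> z)" using x z by (rule pi.hom_mult)
    then have "\<phi> (DG #> (x \<otimes> z)) = \<phi> (DG #> x) + \<phi> (DG #> z)" using phi(1) x z by simp
    then show "rho (x \<otimes> z) = rho x \<otimes> rho z" using h(1) by (simp add: rho_def int_pow_mult)
  qed
  have img: "rho ` carrier G \<subseteq> generate G {h}" using pow_in_H[OF h(1)] by (auto simp: rho_def)
  have rh: "rho h = h" using phi(2) h(1) by (simp add: rho_def)
  have fix_: "\<forall>x \<in> generate G {h}. rho x = x"
  proof
    fix x assume "x \<in> generate G {h}"
    then obtain k where k: "x = h [^] (k::int)" using H_pow[OF h(1)] by blast
    have "rho (h [^] k) = rho h [^] k" by (rule hom_int_pow[OF hom h(1) is_group is_group])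
    then show "rho x = x" using k rh by simp
  qed
  have "retract (generate G {h}) G" unfolding retract_def using H_sub[OF h(1)] hom img fix_ by blast
  then show ?thesis by (rule retract_unimod[OF h])
qed

theorem main:
  assumes h: "h \<in> carrier G" "h \<noteq> \<one>"
  shows "(verbally_closed (generate G {h}) G \<longleftrightarrow> retract (generate G {h}) G)
       \<and> (retract (generate G {h}) G \<longleftrightarrow> primitive AQ (DG #> h))"
  using retract_vc vc_unimod[OF h] unimod_retract[OF h(1)] retract_unimod[OF h]
    unimod_prim[OF h(1)] prim_unimod[OF h] by blast

end


lemma inst:
  assumes d: "d \<ge> 1"
  shows "fsetup (free_solvable_group r d) r (gy r d) geps"
proof -
  interpret F: group "free_group r" by (rule free_group_group)
  interpret N: normal "FN r d" "free_group r" by (rule FN_normal)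
  have Gd: "free_solvable_group r d = free_group r Mod FN r d"
    by (simp add: free_solvable_group_def FN_def)
  interpret Q: group "free_group r Mod FN r d" by (rule N.factorgroup_is_group)
  interpret pi: group_hom "free_group r" "free_group r Mod FN r d" "\<lambda>x. FN r d #>\<^bsub>free_group r\<^esub> x"
    using N.r_coset_hom_Mod by unfold_locales simp
  have letc: "\<And>i b. i < r \<Longrightarrow> [(b, i)] \<in> carrier (free_group r)" by (simp add: free_group_def)
  have carQ: "carrier (free_group r Mod FN r d) = (\<lambda>x. FN r d #>\<^bsub>free_group r\<^esub> x) ` carrier (free_group r)"
    by (rule carrier_FactGroup)
  show ?thesis unfolding Gd
  proof (rule fsetup.intro[OF Q.is_group], unfold fsetup_axioms_def, intro conjI allI impI)
    fix i assume i: "i < r"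
    show "gy r d i \<in> carrier (free_group r Mod FN r d)" unfolding carQ gy_def using letc[OF i] by blast
  next
    let ?K = "(\<lambda>i. [(False, i)]) ` {..<r}"
    have K: "?K \<subseteq> carrier (free_group r)" using letc by auto
    have gF: "generate (free_group r) ?K = carrier (free_group r)"
      using F.generate_incl[OF K] free_gen by blast
    have "gy r d ` {..<r} = (\<lambda>x. FN r d #>\<^bsub>free_group r\<^esub> x) ` ?K" by (auto simp: gy_def image_image)
    then show "generate (free_group r Mod FN r d) (gy r d ` {..<r}) = carrier (free_group r Mod FN r d)"
      using pi.generate_img[OF K] gF carQ by simp
  next
    fix a b i assume a: "a \<in> carrier (free_group r Mod FN r d)" and b: "b \<in> carrier (free_group r Mod FN r d)"
    obtain u where u: "u \<in> carrier (free_group r)" "a = FN r d #>\<^bsub>free_group r\<^esub> u" using a carQ by auto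
    obtain v where v: "v \<in> carrier (free_group r)" "b = FN r d #>\<^bsub>free_group r\<^esub> v" using b carQ by auto
    have e: "a \<otimes>\<^bsub>free_group r Mod FN r d\<^esub> b = FN r d #>\<^bsub>free_group r\<^esub> (u \<otimes>\<^bsub>free_group r\<^esub> v)"
      using u v pi.hom_mult[of u v] by simp
    have ga: "geps a i = esum u i" unfolding u(2) by (rule geps_coset[OF d u(1)])
    have gb: "geps b i = esum v i" unfolding v(2) by (rule geps_coset[OF d v(1)])
    have "geps (a \<otimes>\<^bsub>free_group r Mod FN r d\<^esub> b) i = esum (u \<otimes>\<^bsub>free_group r\<^esub> v) i"
      unfolding e by (rule geps_coset[OF d]) (use u v in simp)
    also have "\<dots> = esum u i + esum v i" by (rule esum_mult)
    finally show "geps (a \<otimes>\<^bsub>free_group r Mod FN r d\<^esub> b) i = geps a i + geps b i"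
      unfolding ga gb .
  next
    fix i j assume i: "i < r"
    show "geps (gy r d i) j = (if j = i then 1 else 0)"
      unfolding gy_def using geps_coset[OF d letc[OF i]] by (simp add: esum_def)
  next
    fix a j assume a: "a \<in> carrier (free_group r Mod FN r d)" and j: "r \<le> j"
    obtain u where u: "u \<in> carrier (free_group r)" "a = FN r d #>\<^bsub>free_group r\<^esub> u" using a carQ by auto
    then show "geps a j = 0" using d j by (simp add: geps_coset esum_supp)
  qed
qed

theorem lemma5:
  fixes r d :: nat and h :: "letter list set"
  defines "G \<equiv> free_solvable_group r d"
  assumes "r \<ge> 1" and "d \<ge> 1"
    and "h \<in> carrier G" and "h \<noteq> \<one>\<^bsub>G\<^esub>"
  shows "(verbally_closed (generate G {h}) G \<longleftrightarrow> retract (generate G {h}) G)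
       \<and> (retract (generate G {h}) G \<longleftrightarrow>
            primitive (G Mod derived G (carrier G)) (derived G (carrier G) #>\<^bsub>G\<^esub> h))"
proof -
  have "fsetup G r (gy r d) geps" unfolding G_def by (rule inst) (rule assms(3))
  from fsetup.main[OF this assms(4) assms(5)] show ?thesis .
qed


end
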